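(* Let $(R,\mathfrak m,k)$ be a complete Noetherian local ring, $E=E_R(k)$, $L$ an $R$-module, and $S\subseteq L$ a subset. Then $\operatorname{tr}_{S,L}(R)=\operatorname{ann}_R\big(0_E^{\mathrm{cl}_{S,L}}\big)$.
   Context: For an $R$-module $N$, $\operatorname{tr}_{S,L}(N)$ is the submodule of $N$ generated by $\{f(s): f\in\operatorname{Hom}_R(L,N),\ s\in S\}$. For $R$-modules $N\subseteq M$, $N^{\mathrm{cl}_{S,L}}_M=\{u\in M: s\otimes u\in\operatorname{im}(L\otimes_R N\to L\otimes_R M)\text{ for all }s\in S\}$; in particular $0^{\mathrm{cl}_{S,L}}_E=\{u\in E: s\otimes u=0\text{ in }L\otimes_R E\text{ for all } s\in S\}$. *)

theory Defs
  imports "HOL-Algebra.Algebra"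
begin

primrec ideal_pow :: "('a, 'b) ring_scheme \<Rightarrow> 'a set \<Rightarrow> nat \<Rightarrow> 'a set" where
  "ideal_pow R I 0 = carrier R"
| "ideal_pow R I (Suc n) = ideal_prod R (ideal_pow R I n) I"

definition local_ring :: "('a, 'b) ring_scheme \<Rightarrow> 'a set \<Rightarrow> bool" where
  "local_ring R m \<longleftrightarrow> cring R \<and> maximalideal m R \<and> (\<forall>I. maximalideal I R \<longrightarrow> I = m)"

definition madic_complete :: "('a, 'b) ring_scheme \<Rightarrow> 'a set \<Rightarrow> bool" where
  "madic_complete R m \<longleftrightarrow>
     (\<forall>x :: nat \<Rightarrow> 'a. (\<forall>n. x n \<in> carrier R) \<and>
        (\<forall>k. \<exists>N. \<forall>n n'. N \<le> n \<and> N \<le> n' \<longrightarrow> x n \<ominus>\<^bsub>R\<^esub> x n' \<in> ideal_pow R m k)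
      \<longrightarrow> (\<exists>y \<in> carrier R. \<forall>k. \<exists>N. \<forall>n. N \<le> n \<longrightarrow> x n \<ominus>\<^bsub>R\<^esub> y \<in> ideal_pow R m k))"

definition lin_functionals :: "('a, 'b) ring_scheme \<Rightarrow> ('a, 'l) module \<Rightarrow> ('l \<Rightarrow> 'a) set" where
  "lin_functionals R L = {f. (\<forall>x \<in> carrier L. f x \<in> carrier R)
      \<and> (\<forall>x \<in> carrier L. \<forall>y \<in> carrier L. f (x \<oplus>\<^bsub>L\<^esub> y) = f x \<oplus>\<^bsub>R\<^esub> f y)
      \<and> (\<forall>r \<in> carrier R. \<forall>x \<in> carrier L. f (smult L r x) = r \<otimes>\<^bsub>R\<^esub> f x)}"

definition trace_ideal :: "('a, 'b) ring_scheme \<Rightarrow> 'l set \<Rightarrow> ('a, 'l) module \<Rightarrow> 'a set" where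
  "trace_ideal R S L = Idl\<^bsub>R\<^esub> {f s | f s. f \<in> lin_functionals R L \<and> s \<in> S}"

definition annihilator :: "('a, 'b) ring_scheme \<Rightarrow> ('a, 'e) module \<Rightarrow> 'e set \<Rightarrow> 'a set" where
  "annihilator R E U = {r \<in> carrier R. \<forall>u \<in> U. smult E r u = \<zero>\<^bsub>E\<^esub>}"

text \<open>Elements of the free R-module on carrier L \<times> carrier E are represented as
  (finitely supported) functions L \<times> E -> R; the basis element of a pair is fdelta.\<close>
definition fdelta :: "('a, 'b) ring_scheme \<Rightarrow> 'l \<times> 'e \<Rightarrow> ('l \<times> 'e \<Rightarrow> 'a)" where
  "fdelta R p = (\<lambda>q. if q = p then \<one>\<^bsub>R\<^esub> else \<zero>\<^bsub>R\<^esub>)"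

definition fadd :: "('a, 'b) ring_scheme \<Rightarrow> ('c \<Rightarrow> 'a) \<Rightarrow> ('c \<Rightarrow> 'a) \<Rightarrow> ('c \<Rightarrow> 'a)" where
  "fadd R f g = (\<lambda>q. f q \<oplus>\<^bsub>R\<^esub> g q)"

definition fsub :: "('a, 'b) ring_scheme \<Rightarrow> ('c \<Rightarrow> 'a) \<Rightarrow> ('c \<Rightarrow> 'a) \<Rightarrow> ('c \<Rightarrow> 'a)" where
  "fsub R f g = (\<lambda>q. f q \<ominus>\<^bsub>R\<^esub> g q)"

definition fsmult :: "('a, 'b) ring_scheme \<Rightarrow> 'a \<Rightarrow> ('c \<Rightarrow> 'a) \<Rightarrow> ('c \<Rightarrow> 'a)" where
  "fsmult R r f = (\<lambda>q. r \<otimes>\<^bsub>R\<^esub> f q)"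

text \<open>The submodule of bilinearity relations; L \<otimes>_R E is the free module modulo it.\<close>
inductive_set tensor_relations ::
  "('a, 'b) ring_scheme \<Rightarrow> ('a, 'l) module \<Rightarrow> ('a, 'e) module \<Rightarrow> ('l \<times> 'e \<Rightarrow> 'a) set"
  for R L E where
  zero: "(\<lambda>_. \<zero>\<^bsub>R\<^esub>) \<in> tensor_relations R L E"
| add_left: "\<lbrakk>x \<in> carrier L; y \<in> carrier L; u \<in> carrier E\<rbrakk> \<Longrightarrow>
     fsub R (fsub R (fdelta R (x \<oplus>\<^bsub>L\<^esub> y, u)) (fdelta R (x, u))) (fdelta R (y, u))
       \<in> tensor_relations R L E"
| add_right: "\<lbrakk>x \<in> carrier L; u \<in> carrier E; v \<in> carrier E\<rbrakk> \<Longrightarrow>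
     fsub R (fsub R (fdelta R (x, u \<oplus>\<^bsub>E\<^esub> v)) (fdelta R (x, u))) (fdelta R (x, v))
       \<in> tensor_relations R L E"
| smult_left: "\<lbrakk>r \<in> carrier R; x \<in> carrier L; u \<in> carrier E\<rbrakk> \<Longrightarrow>
     fsub R (fdelta R (smult L r x, u)) (fsmult R r (fdelta R (x, u))) \<in> tensor_relations R L E"
| smult_right: "\<lbrakk>r \<in> carrier R; x \<in> carrier L; u \<in> carrier E\<rbrakk> \<Longrightarrow>
     fsub R (fdelta R (x, smult E r u)) (fsmult R r (fdelta R (x, u))) \<in> tensor_relations R L E"
| sum: "\<lbrakk>f \<in> tensor_relations R L E; g \<in> tensor_relations R L E\<rbrakk> \<Longrightarrow>
     fadd R f g \<in> tensor_relations R L E"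
| scale: "\<lbrakk>r \<in> carrier R; f \<in> tensor_relations R L E\<rbrakk> \<Longrightarrow>
     fsmult R r f \<in> tensor_relations R L E"

definition tensor_zero ::
  "('a, 'b) ring_scheme \<Rightarrow> ('a, 'l) module \<Rightarrow> ('a, 'e) module \<Rightarrow> 'l \<Rightarrow> 'e \<Rightarrow> bool" where
  "tensor_zero R L E s u \<longleftrightarrow> fdelta R (s, u) \<in> tensor_relations R L E"

definition zero_closure ::
  "('a, 'b) ring_scheme \<Rightarrow> 'l set \<Rightarrow> ('a, 'l) module \<Rightarrow> ('a, 'e) module \<Rightarrow> 'e set" where
  "zero_closure R S L E = {u \<in> carrier E. \<forall>s \<in> S. tensor_zero R L E s u}"

text \<open>Injectivity, in the form of Baer's criterion: every R-linear map I -> E from an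
  ideal I of R extends to R, i.e. is given by multiplication by some element of E.\<close>
definition baer_injective :: "('a, 'b) ring_scheme \<Rightarrow> ('a, 'e) module \<Rightarrow> bool" where
  "baer_injective R E \<longleftrightarrow>
     (\<forall>I g. ideal I R \<and> (\<forall>x \<in> I. g x \<in> carrier E)
        \<and> (\<forall>x \<in> I. \<forall>y \<in> I. g (x \<oplus>\<^bsub>R\<^esub> y) = g x \<oplus>\<^bsub>E\<^esub> g y)
        \<and> (\<forall>r \<in> carrier R. \<forall>x \<in> I. g (r \<otimes>\<^bsub>R\<^esub> x) = smult E r (g x))
      \<longrightarrow> (\<exists>e \<in> carrier E. \<forall>x \<in> I. g x = smult E x e))"

text \<open>E is (isomorphic to) E_R(k): an injective module which is an essential extension of
  a submodule R e0 \<cong> R/m = k (ann e0 = m).\<close>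
definition is_injective_hull_residue_field ::
  "('a, 'b) ring_scheme \<Rightarrow> 'a set \<Rightarrow> ('a, 'e) module \<Rightarrow> bool" where
  "is_injective_hull_residue_field R m E \<longleftrightarrow>
     module R E \<and> baer_injective R E \<and>
     (\<exists>e0 \<in> carrier E. annihilator R E {e0} = m \<and>
        (\<forall>N. submodule N R E \<and> N \<noteq> {\<zero>\<^bsub>E\<^esub>} \<longrightarrow>
             (\<exists>r \<in> carrier R. smult E r e0 \<in> N \<and> smult E r e0 \<noteq> \<zero>\<^bsub>E\<^esub>)))"

end

theory Submission imports Defs begin

lemma (in noetherian_ring) maximal_principle:
  assumes "F \<noteq> {}" "F \<subseteq> {I. ideal I R}"
  shows "\<exists>M\<in>F. \<forall>J\<in>F. M \<subseteq> J \<longrightarrow> J = M"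
proof (rule subset_Zorn)
  fix C assume C: "subset.chain F C"
  show "\<exists>U\<in>F. \<forall>K\<in>C. K \<subseteq> U"
  proof (cases "C = {}")
    case True
    obtain U where "U \<in> F" using assms(1) by blast
    then show ?thesis using True by blast
  next
    case False
    have "C \<subseteq> F" using C by (simp add: pred_on.chain_def)
    then have "subset.chain {I. ideal I R} C" using C assms(2) by (simp add: pred_on.chain_def subset_iff)
    then have "\<Union>C \<in> C" using ideal_chain_is_trivial False by blast
    then show ?thesis using \<open>C \<subseteq> F\<close> by blast
  qed
qed

lemma (in cring) ideal_by_closure:
  assumes "I \<subseteq> carrier R" "\<zero> \<in> I" "\<And>a b. a \<in> I \<Longrightarrow> b \<in> I \<Longrightarrow> a \<oplus> b \<in> I"
    "\<And>a x. a \<in> I \<Longrightarrow> x \<in> carrier R \<Longrightarrow> x \<otimes> a \<in> I"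
  shows "ideal I R"
proof (rule idealI)
  show "ring R" by (rule ring_axioms)
  show "subgroup I (add_monoid R)"
  proof (rule subgroup.intro)
    show "I \<subseteq> carrier (add_monoid R)" using assms(1) by simp
    show "\<And>x y. x \<in> I \<Longrightarrow> y \<in> I \<Longrightarrow> x \<otimes>\<^bsub>add_monoid R\<^esub> y \<in> I" using assms(3) by simp
    show "\<one>\<^bsub>add_monoid R\<^esub> \<in> I" using assms(2) by simp
    fix x assume x: "x \<in> I"
    then have xc: "x \<in> carrier R" using assms(1) by blast
    have "(\<ominus> \<one>) \<otimes> x \<in> I" using assms(4)[OF x] by simp
    then have "\<ominus> x \<in> I" using xc l_minus[of \<one> x] by simp
    then show "inv\<^bsub>add_monoid R\<^esub> x \<in> I" by (simp add: a_inv_def)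
  qed
  fix a x assume "a \<in> I" "x \<in> carrier R"
  then show "x \<otimes> a \<in> I" by (rule assms(4))
  then show "a \<otimes> x \<in> I" using \<open>a \<in> I\<close> \<open>x \<in> carrier R\<close> assms(1) m_comm by (metis subsetD)
qed

lemma (in module) submodule_by_closure:
  assumes "H \<subseteq> carrier M" "\<zero>\<^bsub>M\<^esub> \<in> H" "\<And>a b. a \<in> H \<Longrightarrow> b \<in> H \<Longrightarrow> a \<oplus>\<^bsub>M\<^esub> b \<in> H"
    "\<And>a x. a \<in> carrier R \<Longrightarrow> x \<in> H \<Longrightarrow> a \<odot>\<^bsub>M\<^esub> x \<in> H"
  shows "submodule H R M"
proof (rule submoduleI)
  fix a assume a: "a \<in> H"
  then have "(\<ominus> \<one>) \<odot>\<^bsub>M\<^esub> a \<in> H" using assms(4) by simp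
  then show "\<ominus>\<^bsub>M\<^esub> a \<in> H" using a assms(1) smult_l_minus[of \<one> a] by (simp add: subset_iff)
qed (use assms in auto)

lemma (in module) mh_add:
  assumes "a \<in> carrier M" "b \<in> carrier M" "w \<in> carrier M" "c \<in> carrier R" "d \<in> carrier R"
  shows "(a \<oplus>\<^bsub>M\<^esub> c \<odot>\<^bsub>M\<^esub> w) \<oplus>\<^bsub>M\<^esub> (b \<oplus>\<^bsub>M\<^esub> d \<odot>\<^bsub>M\<^esub> w) = (a \<oplus>\<^bsub>M\<^esub> b) \<oplus>\<^bsub>M\<^esub> (c \<oplus> d) \<odot>\<^bsub>M\<^esub> w"
  using assms by (simp add: smult_l_distr M.a_ac)

lemma (in module) mh_smult:
  assumes "a \<in> carrier M" "w \<in> carrier M" "c \<in> carrier R" "r \<in> carrier R"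
  shows "r \<odot>\<^bsub>M\<^esub> (a \<oplus>\<^bsub>M\<^esub> c \<odot>\<^bsub>M\<^esub> w) = r \<odot>\<^bsub>M\<^esub> a \<oplus>\<^bsub>M\<^esub> (r \<otimes> c) \<odot>\<^bsub>M\<^esub> w"
  using assms by (simp add: smult_r_distr smult_assoc1)

definition RM :: "('a,'b) ring_scheme \<Rightarrow> ('a,'a) module" where
  "RM R = \<lparr>carrier = carrier R, monoid.mult = monoid.mult R, one = monoid.one R, ring.zero = ring.zero R, ring.add = ring.add R, smult = monoid.mult R\<rparr>"

lemma RM_simps [simp]: "carrier (RM R) = carrier R" "ring.add (RM R) = ring.add R" "ring.zero (RM R) = ring.zero R"
  "smult (RM R) = monoid.mult R"
  by (simp_all add: RM_def)

lemma (in cring) RM_module: "module R (RM R)"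
proof (rule moduleI)
  show "cring R" by (rule is_cring)
  show "abelian_group (RM R)"
  proof (rule abelian_groupI)
    fix x assume "x \<in> carrier (RM R)"
    then have "x \<in> carrier R" by simp
    then show "\<exists>y\<in>carrier (RM R). y \<oplus>\<^bsub>RM R\<^esub> x = \<zero>\<^bsub>RM R\<^esub>" using l_neg by force
  qed (simp_all add: a_ac)
qed (simp_all add: l_distr r_distr m_assoc)

lemma (in module) smult_diff_zero:
  assumes "a \<in> carrier R" "b \<in> carrier R" "x \<in> carrier M"
  shows "(a \<ominus> b) \<odot>\<^bsub>M\<^esub> x = \<zero>\<^bsub>M\<^esub> \<longleftrightarrow> a \<odot>\<^bsub>M\<^esub> x = b \<odot>\<^bsub>M\<^esub> x"
proof -
  have "(a \<ominus> b) \<odot>\<^bsub>M\<^esub> x = a \<odot>\<^bsub>M\<^esub> x \<oplus>\<^bsub>M\<^esub> \<ominus>\<^bsub>M\<^esub> (b \<odot>\<^bsub>M\<^esub> x)"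
    using assms by (simp add: R.minus_eq smult_l_distr smult_l_minus)
  then show ?thesis using assms
    by (metis M.add.inv_closed M.add.inv_equality M.minus_minus M.r_neg smult_closed)
qed

lemma ideal_pow_ideal: "cring R \<Longrightarrow> ideal I R \<Longrightarrow> ideal (ideal_pow R I n) R"
proof (induction n)
  case 0 then show ?case by (simp add: cring.axioms(1) ring.oneideal)
next
  case (Suc n) then show ?case by (simp add: cring.axioms(1) ring.ideal_prod_is_ideal)
qed

lemma ideal_pow_mono: assumes "cring R" "ideal I R" "k \<le> n" shows "ideal_pow R I n \<subseteq> ideal_pow R I k"
  using assms(3)
proof (induction n)
  case 0 then show ?case by simp
next
  case (Suc n)
  have "ideal_pow R I (Suc n) \<subseteq> ideal_pow R I n"
    using ring.ideal_prod_inter[OF cring.axioms(1)[OF assms(1)] ideal_pow_ideal[OF assms(1,2), of n] assms(2)] by simp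
  then show ?case using Suc by (cases "k = Suc n") auto
qed

definition killed :: "('a,'e) module \<Rightarrow> 'a set \<Rightarrow> 'e set" where
  "killed E J = {u \<in> carrier E. \<forall>j\<in>J. j \<odot>\<^bsub>E\<^esub> u = \<zero>\<^bsub>E\<^esub>}"

definition lin_on :: "('a,'e) module \<Rightarrow> ('e \<Rightarrow> 'e) \<Rightarrow> 'a set \<Rightarrow> 'e set \<Rightarrow> bool" where
  "lin_on E \<psi> A U \<longleftrightarrow> (\<forall>u\<in>U. \<psi> u \<in> carrier E) \<and> (\<forall>u\<in>U. \<forall>v\<in>U. \<psi> (u \<oplus>\<^bsub>E\<^esub> v) = \<psi> u \<oplus>\<^bsub>E\<^esub> \<psi> v)
     \<and> (\<forall>r\<in>A. \<forall>u\<in>U. \<psi> (r \<odot>\<^bsub>E\<^esub> u) = r \<odot>\<^bsub>E\<^esub> \<psi> u)"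

definition FM :: "('a,'b) ring_scheme \<Rightarrow> ('a, 'c \<Rightarrow> 'a) module" where
  "FM R = \<lparr>carrier = {f. \<forall>q. f q \<in> carrier R}, monoid.mult = undefined, one = undefined,
     ring.zero = (\<lambda>_. \<zero>\<^bsub>R\<^esub>), ring.add = fadd R, smult = fsmult R\<rparr>"

lemma FM_simps [simp]: "carrier (FM R) = {f. \<forall>q. f q \<in> carrier R}" "ring.add (FM R) = fadd R"
  "ring.zero (FM R) = (\<lambda>_. \<zero>\<^bsub>R\<^esub>)" "smult (FM R) = fsmult R"
  by (simp_all add: FM_def)

lemma (in cring) FM_module: "module R (FM R)"
proof (rule moduleI)
  show "cring R" by (rule is_cring)
  show "abelian_group (FM R)"
  proof (rule abelian_groupI)
    fix x assume "x \<in> carrier (FM R)"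
    then have x: "\<And>q. x q \<in> carrier R" by simp
    have "(\<lambda>q. \<ominus> x q) \<in> carrier (FM R)" using x by simp
    moreover have "(\<lambda>q. \<ominus> x q) \<oplus>\<^bsub>FM R\<^esub> x = \<zero>\<^bsub>FM R\<^esub>" using x by (simp add: fadd_def l_neg)
    ultimately show "\<exists>y\<in>carrier (FM R). y \<oplus>\<^bsub>FM R\<^esub> x = \<zero>\<^bsub>FM R\<^esub>" by blast
  qed (auto simp: fadd_def a_ac)
qed (auto simp: fadd_def fsmult_def l_distr r_distr m_assoc)

lemma (in cring) FM_minus: "F \<in> carrier (FM R) \<Longrightarrow> G \<in> carrier (FM R) \<Longrightarrow> fsub R F G = F \<ominus>\<^bsub>FM R\<^esub> G"
proof -
  assume F: "F \<in> carrier (FM R)" and G: "G \<in> carrier (FM R)"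
  interpret V: module R "FM R" by (rule FM_module)
  have inv: "\<ominus>\<^bsub>FM R\<^esub> G = (\<lambda>q. \<ominus> G q)"
    by (rule V.M.add.inv_equality) (use G in \<open>simp_all add: fadd_def l_neg\<close>)
  show ?thesis unfolding a_minus_def inv using F G by (simp add: fadd_def fsub_def minus_eq)
qed

lemma (in abelian_group) minus_eq_iff:
  assumes "a \<in> carrier G" "b \<in> carrier G" "c \<in> carrier G"
  shows "a \<ominus> b = c \<longleftrightarrow> a = c \<oplus> b"
proof
  assume "a \<ominus> b = c"
  then have "c \<oplus> b = (a \<oplus> \<ominus> b) \<oplus> b" by (simp add: minus_eq)
  also have "\<dots> = a" using assms by (simp add: a_assoc l_neg)
  finally show "a = c \<oplus> b" by simp
next
  assume "a = c \<oplus> b"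
  then have "a \<ominus> b = (c \<oplus> b) \<oplus> \<ominus> b" by (simp add: minus_eq)
  also have "\<dots> = c" using assms by (simp add: a_assoc r_neg)
  finally show "a \<ominus> b = c" .
qed

lemma (in abelian_group) minus3_zero:
  assumes "a \<in> carrier G" "b \<in> carrier G"
  shows "((a \<oplus> b) \<ominus> a) \<ominus> b = \<zero>"
proof -
  have "(a \<oplus> b) \<ominus> a = b" using assms minus_eq_iff[of "a \<oplus> b" a b] by (simp add: a_comm)
  then show ?thesis using assms minus_eq_iff[of b b \<zero>] by simp
qed

lemma (in abelian_group) minus_self: "a \<in> carrier G \<Longrightarrow> a \<ominus> a = \<zero>"
  by (simp add: minus_eq r_neg)

lemma (in abelian_group) minus_zero_eq:
  assumes "a \<in> carrier G" "b \<in> carrier G" "a \<ominus> b = \<zero>" shows "a = b"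
  using assms by (metis a_minus_def add.inv_closed minus_equality minus_minus)

locale ctx = module R E for R :: "('a,'b) ring_scheme" (structure) and E :: "('a,'e) module" (structure) +
  fixes m :: "'a set" and e0 :: 'e
  assumes noeth: "noetherian_ring R" and mmax: "maximalideal m R" and muniq: "\<And>I. maximalideal I R \<Longrightarrow> I = m"
  and baer: "baer_injective R E" and e0: "e0 \<in> carrier E" and ann_e0: "annihilator R E {e0} = m"
  and ess: "\<And>N. submodule N R E \<Longrightarrow> N \<noteq> {\<zero>\<^bsub>E\<^esub>} \<Longrightarrow> \<exists>r\<in>carrier R. r \<odot>\<^bsub>E\<^esub> e0 \<in> N \<and> r \<odot>\<^bsub>E\<^esub> e0 \<noteq> \<zero>\<^bsub>E\<^esub>"
begin

lemma m_ideal: "ideal m R" by (rule maximalideal.axioms(1)[OF mmax])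
lemma m_sub: "m \<subseteq> carrier R" using ideal.Icarr[OF m_ideal] by (rule subsetI)
lemma one_not_m: "\<one> \<notin> m"
proof
  assume "\<one> \<in> m"
  then have "m = carrier R" by (rule ideal.one_imp_carrier[OF m_ideal])
  then show False using maximalideal.I_notcarr[OF mmax] by simp
qed

lemma e0_m: assumes "a \<in> m" shows "a \<odot>\<^bsub>E\<^esub> e0 = \<zero>\<^bsub>E\<^esub>"
proof -
  have "a \<in> annihilator R E {e0}" using assms ann_e0 by simp
  then show ?thesis unfolding annihilator_def by simp
qed
lemma e0_nz: "e0 \<noteq> \<zero>\<^bsub>E\<^esub>"
proof
  assume "e0 = \<zero>\<^bsub>E\<^esub>"
  then have "\<one> \<in> annihilator R E {e0}" unfolding annihilator_def by simp
  then show False using ann_e0 one_not_m by simp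
qed
lemma e0_notm: assumes "a \<in> carrier R" "a \<notin> m" shows "a \<odot>\<^bsub>E\<^esub> e0 \<noteq> \<zero>\<^bsub>E\<^esub>"
proof
  assume "a \<odot>\<^bsub>E\<^esub> e0 = \<zero>\<^bsub>E\<^esub>"
  then have "a \<in> annihilator R E {e0}" unfolding annihilator_def using assms(1) by simp
  then show False using ann_e0 assms(2) by simp
qed

lemma nonunit_in_m:
  assumes a: "a \<in> carrier R" "a \<notin> Units R" shows "a \<in> m"
proof -
  let ?F = "{K. ideal K R \<and> a \<in> K \<and> \<one> \<notin> K}"
  have "PIdl a \<in> ?F"
  proof -
    have "\<one> \<notin> PIdl a"
    proof
      assume "\<one> \<in> PIdl a"
      then obtain x where x: "x \<in> carrier R" "\<one> = x \<otimes> a" unfolding cgenideal_def by blast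
      then have "a \<otimes> x = \<one>" using a(1) m_comm by simp
      then have "a \<in> Units R" using x a(1) unfolding Units_def by force
      then show False using a by simp
    qed
    then show ?thesis using cgenideal_ideal[OF a(1)] cgenideal_self[OF a(1)] by simp
  qed
  then have Fne: "?F \<noteq> {}" by blast
  obtain K where K: "K \<in> ?F" and Kmax: "\<forall>J\<in>?F. K \<subseteq> J \<longrightarrow> J = K"
    using noetherian_ring.maximal_principle[OF noeth Fne] by blast
  have "maximalideal K R"
  proof (rule maximalidealI)
    show "ideal K R" using K by simp
    show "carrier R \<noteq> K" using K by auto
    fix J assume J: "ideal J R" "K \<subseteq> J" "J \<subseteq> carrier R"
    show "J = K \<or> J = carrier R"
    proof (cases "\<one> \<in> J")
      case True then show ?thesis using ideal.one_imp_carrier[OF J(1)] by simp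
    next
      case False then have "J \<in> ?F" using J K by blast
      then show ?thesis using Kmax J(2) by simp
    qed
  qed
  then have "K = m" by (rule muniq)
  then show ?thesis using K by simp
qed

lemma notm_unit: "a \<in> carrier R \<Longrightarrow> a \<notin> m \<Longrightarrow> a \<in> Units R"
  using nonunit_in_m by blast

end

definition lin_graph :: "('a,'b) ring_scheme \<Rightarrow> ('a,'v) module \<Rightarrow> ('a,'e) module \<Rightarrow> ('v \<times> 'e) set \<Rightarrow> bool" where
 "lin_graph R V E G \<longleftrightarrow> G \<subseteq> carrier V \<times> carrier E \<and> (\<zero>\<^bsub>V\<^esub>, \<zero>\<^bsub>E\<^esub>) \<in> G
   \<and> (\<forall>a v b w. (a,v) \<in> G \<longrightarrow> (b,w) \<in> G \<longrightarrow> (a \<oplus>\<^bsub>V\<^esub> b, v \<oplus>\<^bsub>E\<^esub> w) \<in> G)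
   \<and> (\<forall>r a v. r \<in> carrier R \<longrightarrow> (a,v) \<in> G \<longrightarrow> (r \<odot>\<^bsub>V\<^esub> a, r \<odot>\<^bsub>E\<^esub> v) \<in> G)
   \<and> (\<forall>v. (\<zero>\<^bsub>V\<^esub>, v) \<in> G \<longrightarrow> v = \<zero>\<^bsub>E\<^esub>)"

context ctx begin

lemma lin_graph_fun:
  assumes V: "module R V" and G: "lin_graph R V E G" and av: "(a,v) \<in> G" and aw: "(a,w) \<in> G"
  shows "v = w"
proof -
  interpret V: module R V by fact
  have a: "a \<in> carrier V" and v: "v \<in> carrier E" and w: "w \<in> carrier E"
    using G av aw unfolding lin_graph_def by auto
  have "((\<ominus> \<one>) \<odot>\<^bsub>V\<^esub> a, (\<ominus> \<one>) \<odot>\<^bsub>E\<^esub> w) \<in> G"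
    using G aw unfolding lin_graph_def by simp
  then have "(\<ominus>\<^bsub>V\<^esub> a, \<ominus>\<^bsub>E\<^esub> w) \<in> G"
    using a w V.smult_l_minus[of \<one> a] smult_l_minus[of \<one> w] by simp
  then have "(a \<oplus>\<^bsub>V\<^esub> \<ominus>\<^bsub>V\<^esub> a, v \<oplus>\<^bsub>E\<^esub> \<ominus>\<^bsub>E\<^esub> w) \<in> G"
    using G av unfolding lin_graph_def by blast
  then have "(\<zero>\<^bsub>V\<^esub>, v \<oplus>\<^bsub>E\<^esub> \<ominus>\<^bsub>E\<^esub> w) \<in> G"
    using a V.M.r_neg by simp
  then have "v \<oplus>\<^bsub>E\<^esub> \<ominus>\<^bsub>E\<^esub> w = \<zero>\<^bsub>E\<^esub>" using G unfolding lin_graph_def by blast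
  then show ?thesis using v w by (metis M.add.inv_equality M.minus_minus M.a_inv_closed M.a_comm)
qed


lemma lin_graph_Union:
  assumes C: "C \<noteq> {}" "subset.chain {G. lin_graph R V E G} C"
  shows "lin_graph R V E (\<Union>C)"
proof -
  have mem: "\<And>G. G \<in> C \<Longrightarrow> lin_graph R V E G" using C(2) unfolding pred_on.chain_def by blast
  have cmp: "\<And>G1 G2. G1 \<in> C \<Longrightarrow> G2 \<in> C \<Longrightarrow> G1 \<subseteq> G2 \<or> G2 \<subseteq> G1"
    using C(2) unfolding pred_on.chain_def by blast
  obtain G0 where G0: "G0 \<in> C" using C(1) by blast
  show ?thesis unfolding lin_graph_def
  proof (intro conjI allI impI)
    show "\<Union>C \<subseteq> carrier V \<times> carrier E" using mem unfolding lin_graph_def by blast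
    show "(\<zero>\<^bsub>V\<^esub>, \<zero>\<^bsub>E\<^esub>) \<in> \<Union>C" using mem[OF G0] G0 unfolding lin_graph_def by blast
  next
    fix a v b w assume av: "(a,v) \<in> \<Union>C" and bw: "(b,w) \<in> \<Union>C"
    then obtain G1 G2 where G1: "G1 \<in> C" "(a,v) \<in> G1" and G2: "G2 \<in> C" "(b,w) \<in> G2" by blast
    show "(a \<oplus>\<^bsub>V\<^esub> b, v \<oplus>\<^bsub>E\<^esub> w) \<in> \<Union>C"
    proof (cases "G1 \<subseteq> G2")
      case True
      then have "(a \<oplus>\<^bsub>V\<^esub> b, v \<oplus>\<^bsub>E\<^esub> w) \<in> G2" using mem[OF G2(1)] G1 G2 unfolding lin_graph_def by blast
      then show ?thesis using G2 by blast
    next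
      case False
      then have "G2 \<subseteq> G1" using cmp G1 G2 by blast
      then have "(a \<oplus>\<^bsub>V\<^esub> b, v \<oplus>\<^bsub>E\<^esub> w) \<in> G1" using mem[OF G1(1)] G1 G2 unfolding lin_graph_def by blast
      then show ?thesis using G1 by blast
    qed
  next
    fix r a v assume r: "r \<in> carrier R" and av: "(a,v) \<in> \<Union>C"
    then obtain G1 where G1: "G1 \<in> C" "(a,v) \<in> G1" by blast
    then have "(r \<odot>\<^bsub>V\<^esub> a, r \<odot>\<^bsub>E\<^esub> v) \<in> G1" using mem[OF G1(1)] r unfolding lin_graph_def by blast
    then show "(r \<odot>\<^bsub>V\<^esub> a, r \<odot>\<^bsub>E\<^esub> v) \<in> \<Union>C" using G1 by blast
  next
    fix v assume "(\<zero>\<^bsub>V\<^esub>, v) \<in> \<Union>C"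
    then obtain G1 where G1: "G1 \<in> C" "(\<zero>\<^bsub>V\<^esub>, v) \<in> G1" by blast
    then show "v = \<zero>\<^bsub>E\<^esub>" using mem[OF G1(1)] unfolding lin_graph_def by blast
  qed
qed


lemma lin_graph_extend:
  assumes V: "module R V" and G: "lin_graph R V E G" and w: "w \<in> carrier V" and nw: "\<forall>v. (w,v) \<notin> G"
  shows "\<exists>G'. lin_graph R V E G' \<and> G \<subseteq> G' \<and> G' \<noteq> G"
proof -
  interpret V: module R V by fact
  have Gsub: "G \<subseteq> carrier V \<times> carrier E" and G0: "(\<zero>\<^bsub>V\<^esub>, \<zero>\<^bsub>E\<^esub>) \<in> G"
    and Gadd: "\<And>a v b u. (a,v)\<in>G \<Longrightarrow> (b,u)\<in>G \<Longrightarrow> (a \<oplus>\<^bsub>V\<^esub> b, v \<oplus>\<^bsub>E\<^esub> u) \<in> G"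
    and Gsm: "\<And>r a v. r \<in> carrier R \<Longrightarrow> (a,v)\<in>G \<Longrightarrow> (r \<odot>\<^bsub>V\<^esub> a, r \<odot>\<^bsub>E\<^esub> v) \<in> G"
    and Gz: "\<And>v. (\<zero>\<^bsub>V\<^esub>, v) \<in> G \<Longrightarrow> v = \<zero>\<^bsub>E\<^esub>"
    using G unfolding lin_graph_def by blast+
  have Gfun: "\<And>a v u. (a,v)\<in>G \<Longrightarrow> (a,u)\<in>G \<Longrightarrow> v = u" using lin_graph_fun[OF V G] by blast
  have GV: "\<And>a v. (a,v) \<in> G \<Longrightarrow> a \<in> carrier V" and GE: "\<And>a v. (a,v) \<in> G \<Longrightarrow> v \<in> carrier E"
    using Gsub by blast+
  define I where "I = {a \<in> carrier R. \<exists>v. (a \<odot>\<^bsub>V\<^esub> w, v) \<in> G}"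
  define g where "g a = (THE v. (a \<odot>\<^bsub>V\<^esub> w, v) \<in> G)" for a
  have gI: "(a \<odot>\<^bsub>V\<^esub> w, g a) \<in> G" if a: "a \<in> I" for a
  proof -
    obtain v where v: "(a \<odot>\<^bsub>V\<^esub> w, v) \<in> G" using a unfolding I_def by blast
    have "g a = v" unfolding g_def using v Gfun by blast
    then show ?thesis using v by simp
  qed
  have gv: "g a = v" if "(a \<odot>\<^bsub>V\<^esub> w, v) \<in> G" "a \<in> carrier R" for a v
  proof -
    have "a \<in> I" unfolding I_def using that by blast
    then show ?thesis using gI that Gfun by blast
  qed
  have Icar: "I \<subseteq> carrier R" unfolding I_def by blast
  have I0: "\<zero> \<in> I" unfolding I_def using G0 w by auto
  have Iadd: "a \<oplus> b \<in> I \<and> g (a \<oplus> b) = g a \<oplus>\<^bsub>E\<^esub> g b" if "a \<in> I" "b \<in> I" for a b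
  proof -
    have ab: "a \<in> carrier R" "b \<in> carrier R" using that Icar by blast+
    have "(a \<odot>\<^bsub>V\<^esub> w \<oplus>\<^bsub>V\<^esub> b \<odot>\<^bsub>V\<^esub> w, g a \<oplus>\<^bsub>E\<^esub> g b) \<in> G"
      using Gadd gI that by blast
    then have *: "((a \<oplus> b) \<odot>\<^bsub>V\<^esub> w, g a \<oplus>\<^bsub>E\<^esub> g b) \<in> G" using ab w V.smult_l_distr by simp
    then show ?thesis using gv[OF *] ab unfolding I_def by auto
  qed
  have Ism: "x \<otimes> a \<in> I \<and> g (x \<otimes> a) = x \<odot>\<^bsub>E\<^esub> g a" if "a \<in> I" "x \<in> carrier R" for a x
  proof -
    have a: "a \<in> carrier R" using that Icar by blast
    have "(x \<odot>\<^bsub>V\<^esub> (a \<odot>\<^bsub>V\<^esub> w), x \<odot>\<^bsub>E\<^esub> g a) \<in> G"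
      using Gsm gI that by blast
    then have *: "((x \<otimes> a) \<odot>\<^bsub>V\<^esub> w, x \<odot>\<^bsub>E\<^esub> g a) \<in> G" using a that(2) w V.smult_assoc1 by simp
    then show ?thesis using gv[OF *] a that(2) unfolding I_def by auto
  qed
  have Iid: "ideal I R"
    by (rule ideal_by_closure[OF Icar I0]) (use Iadd Ism in blast)+
  have "\<exists>e\<in>carrier E. \<forall>x\<in>I. g x = x \<odot>\<^bsub>E\<^esub> e"
    using baer unfolding baer_injective_def
  proof (elim allE impE)
    show "ideal I R \<and> (\<forall>x\<in>I. g x \<in> carrier E) \<and> (\<forall>x\<in>I. \<forall>y\<in>I. g (x \<oplus> y) = g x \<oplus>\<^bsub>E\<^esub> g y)
        \<and> (\<forall>r\<in>carrier R. \<forall>x\<in>I. g (r \<otimes> x) = r \<odot>\<^bsub>E\<^esub> g x)"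
      using Iid gI GE Iadd Ism by blast
  qed
  then obtain e where e: "e \<in> carrier E" and ge: "\<And>x. x \<in> I \<Longrightarrow> g x = x \<odot>\<^bsub>E\<^esub> e" by blast
  define G' where "G' = {(a \<oplus>\<^bsub>V\<^esub> c \<odot>\<^bsub>V\<^esub> w, v \<oplus>\<^bsub>E\<^esub> c \<odot>\<^bsub>E\<^esub> e) | a v c. (a,v) \<in> G \<and> c \<in> carrier R}"
  have "lin_graph R V E G'" unfolding lin_graph_def
  proof (intro conjI allI impI)
    show "G' \<subseteq> carrier V \<times> carrier E" unfolding G'_def using GV GE w e by auto
    have "(\<zero>\<^bsub>V\<^esub> \<oplus>\<^bsub>V\<^esub> \<zero> \<odot>\<^bsub>V\<^esub> w, \<zero>\<^bsub>E\<^esub> \<oplus>\<^bsub>E\<^esub> \<zero> \<odot>\<^bsub>E\<^esub> e) \<in> G'"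
      unfolding G'_def using G0 by blast
    then show "(\<zero>\<^bsub>V\<^esub>, \<zero>\<^bsub>E\<^esub>) \<in> G'" using w e by simp
  next
    fix a v b u assume "(a, v) \<in> G'" "(b, u) \<in> G'"
    then obtain a1 v1 c1 a2 v2 c2 where 1: "(a1,v1) \<in> G" "c1 \<in> carrier R" "a = a1 \<oplus>\<^bsub>V\<^esub> c1 \<odot>\<^bsub>V\<^esub> w" "v = v1 \<oplus>\<^bsub>E\<^esub> c1 \<odot>\<^bsub>E\<^esub> e"
      and 2: "(a2,v2) \<in> G" "c2 \<in> carrier R" "b = a2 \<oplus>\<^bsub>V\<^esub> c2 \<odot>\<^bsub>V\<^esub> w" "u = v2 \<oplus>\<^bsub>E\<^esub> c2 \<odot>\<^bsub>E\<^esub> e"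
      unfolding G'_def by blast
    have "a \<oplus>\<^bsub>V\<^esub> b = (a1 \<oplus>\<^bsub>V\<^esub> a2) \<oplus>\<^bsub>V\<^esub> (c1 \<oplus> c2) \<odot>\<^bsub>V\<^esub> w"
      using 1 2 GV w V.mh_add by simp
    moreover have "v \<oplus>\<^bsub>E\<^esub> u = (v1 \<oplus>\<^bsub>E\<^esub> v2) \<oplus>\<^bsub>E\<^esub> (c1 \<oplus> c2) \<odot>\<^bsub>E\<^esub> e"
      using 1 2 GE e mh_add by simp
    moreover have "(a1 \<oplus>\<^bsub>V\<^esub> a2, v1 \<oplus>\<^bsub>E\<^esub> v2) \<in> G" using Gadd 1 2 by blast
    ultimately show "(a \<oplus>\<^bsub>V\<^esub> b, v \<oplus>\<^bsub>E\<^esub> u) \<in> G'" unfolding G'_def using 1 2 by blast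
  next
    fix r a v assume r: "r \<in> carrier R" and "(a, v) \<in> G'"
    then obtain a1 v1 c1 where 1: "(a1,v1) \<in> G" "c1 \<in> carrier R" "a = a1 \<oplus>\<^bsub>V\<^esub> c1 \<odot>\<^bsub>V\<^esub> w" "v = v1 \<oplus>\<^bsub>E\<^esub> c1 \<odot>\<^bsub>E\<^esub> e"
      unfolding G'_def by blast
    have "r \<odot>\<^bsub>V\<^esub> a = r \<odot>\<^bsub>V\<^esub> a1 \<oplus>\<^bsub>V\<^esub> (r \<otimes> c1) \<odot>\<^bsub>V\<^esub> w"
      using 1 r GV w V.mh_smult by simp
    moreover have "r \<odot>\<^bsub>E\<^esub> v = r \<odot>\<^bsub>E\<^esub> v1 \<oplus>\<^bsub>E\<^esub> (r \<otimes> c1) \<odot>\<^bsub>E\<^esub> e"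
      using 1 r GE e mh_smult by simp
    moreover have "(r \<odot>\<^bsub>V\<^esub> a1, r \<odot>\<^bsub>E\<^esub> v1) \<in> G" using Gsm 1 r by blast
    ultimately show "(r \<odot>\<^bsub>V\<^esub> a, r \<odot>\<^bsub>E\<^esub> v) \<in> G'" unfolding G'_def using 1 r by blast
  next
    fix v assume "(\<zero>\<^bsub>V\<^esub>, v) \<in> G'"
    then obtain a1 v1 c1 where 1: "(a1,v1) \<in> G" "c1 \<in> carrier R" "\<zero>\<^bsub>V\<^esub> = a1 \<oplus>\<^bsub>V\<^esub> c1 \<odot>\<^bsub>V\<^esub> w" "v = v1 \<oplus>\<^bsub>E\<^esub> c1 \<odot>\<^bsub>E\<^esub> e"
      unfolding G'_def by blast
    have a1: "a1 \<in> carrier V" and v1: "v1 \<in> carrier E" using 1 GV GE by blast+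
    have cw: "c1 \<odot>\<^bsub>V\<^esub> w = \<ominus>\<^bsub>V\<^esub> a1"
      using 1(3) a1 w 1(2) by (metis V.M.add.inv_equality V.M.a_comm V.smult_closed)
    have "((\<ominus> \<one>) \<odot>\<^bsub>V\<^esub> a1, (\<ominus> \<one>) \<odot>\<^bsub>E\<^esub> v1) \<in> G" using Gsm 1 by simp
    then have "(c1 \<odot>\<^bsub>V\<^esub> w, \<ominus>\<^bsub>E\<^esub> v1) \<in> G"
      using cw a1 v1 V.smult_l_minus[of \<one> a1] smult_l_minus[of \<one> v1] by simp
    then have "g c1 = \<ominus>\<^bsub>E\<^esub> v1" using gv 1(2) by blast
    moreover have "c1 \<in> I" unfolding I_def using 1(2) \<open>(c1 \<odot>\<^bsub>V\<^esub> w, \<ominus>\<^bsub>E\<^esub> v1) \<in> G\<close> by blast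
    ultimately have "c1 \<odot>\<^bsub>E\<^esub> e = \<ominus>\<^bsub>E\<^esub> v1" using ge by simp
    then show "v = \<zero>\<^bsub>E\<^esub>" using 1(4) v1 M.r_neg by simp
  qed
  moreover have "G \<subseteq> G'"
  proof
    fix p assume p: "p \<in> G"
    obtain a v where av: "p = (a,v)" by (cases p)
    have "(a \<oplus>\<^bsub>V\<^esub> \<zero> \<odot>\<^bsub>V\<^esub> w, v \<oplus>\<^bsub>E\<^esub> \<zero> \<odot>\<^bsub>E\<^esub> e) \<in> G'"
      unfolding G'_def using p av by blast
    then show "p \<in> G'" using av p GV GE w e by simp
  qed
  moreover have "G' \<noteq> G"
  proof
    assume eq: "G' = G"
    have "(\<zero>\<^bsub>V\<^esub> \<oplus>\<^bsub>V\<^esub> \<one> \<odot>\<^bsub>V\<^esub> w, \<zero>\<^bsub>E\<^esub> \<oplus>\<^bsub>E\<^esub> \<one> \<odot>\<^bsub>E\<^esub> e) \<in> G'"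
      unfolding G'_def using G0 by blast
    then have "(w, e) \<in> G" using eq w e by simp
    then show False using nw by blast
  qed
  ultimately show ?thesis by blast
qed


lemma cogen:
  fixes V :: "('a,'v) module"
  assumes V: "module R V" and K: "submodule K R V" and x: "x \<in> carrier V" and xK: "x \<notin> K"
  shows "\<exists>H. (\<forall>y\<in>carrier V. H y \<in> carrier E)
    \<and> (\<forall>y\<in>carrier V. \<forall>z\<in>carrier V. H (y \<oplus>\<^bsub>V\<^esub> z) = H y \<oplus>\<^bsub>E\<^esub> H z)
    \<and> (\<forall>r\<in>carrier R. \<forall>y\<in>carrier V. H (r \<odot>\<^bsub>V\<^esub> y) = r \<odot>\<^bsub>E\<^esub> H y)
    \<and> (\<forall>k\<in>K. H k = \<zero>\<^bsub>E\<^esub>) \<and> H x = e0"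
proof -
  interpret V: module R V by fact
  have Ksub: "K \<subseteq> carrier V" and Kinv: "\<And>a. a \<in> K \<Longrightarrow> \<ominus>\<^bsub>V\<^esub> a \<in> K"
    and Ksm: "\<And>a b. a \<in> carrier R \<Longrightarrow> b \<in> K \<Longrightarrow> a \<odot>\<^bsub>V\<^esub> b \<in> K"
    and Kadd: "\<And>a b. a \<in> K \<Longrightarrow> b \<in> K \<Longrightarrow> a \<oplus>\<^bsub>V\<^esub> b \<in> K"
    using V.submoduleE[OF K] by blast+
  have K0: "\<zero>\<^bsub>V\<^esub> \<in> K" using K submodule.axioms(1) subgroup.one_closed by fastforce
  define G0 where "G0 = {(k \<oplus>\<^bsub>V\<^esub> c \<odot>\<^bsub>V\<^esub> x, c \<odot>\<^bsub>E\<^esub> e0) | k c. k \<in> K \<and> c \<in> carrier R}"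
  have lg0: "lin_graph R V E G0" unfolding lin_graph_def
  proof (intro conjI allI impI)
    show "G0 \<subseteq> carrier V \<times> carrier E" unfolding G0_def using Ksub x e0 by auto
    have "(\<zero>\<^bsub>V\<^esub> \<oplus>\<^bsub>V\<^esub> \<zero> \<odot>\<^bsub>V\<^esub> x, \<zero> \<odot>\<^bsub>E\<^esub> e0) \<in> G0"
      unfolding G0_def using K0 by blast
    then show "(\<zero>\<^bsub>V\<^esub>, \<zero>\<^bsub>E\<^esub>) \<in> G0" using x e0 by simp
  next
    fix a v b u assume "(a, v) \<in> G0" "(b, u) \<in> G0"
    then obtain a1 c1 a2 c2 where 1: "a1 \<in> K" "c1 \<in> carrier R" "a = a1 \<oplus>\<^bsub>V\<^esub> c1 \<odot>\<^bsub>V\<^esub> x" "v = c1 \<odot>\<^bsub>E\<^esub> e0"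
      and 2: "a2 \<in> K" "c2 \<in> carrier R" "b = a2 \<oplus>\<^bsub>V\<^esub> c2 \<odot>\<^bsub>V\<^esub> x" "u = c2 \<odot>\<^bsub>E\<^esub> e0"
      unfolding G0_def by blast
    have "a \<oplus>\<^bsub>V\<^esub> b = (a1 \<oplus>\<^bsub>V\<^esub> a2) \<oplus>\<^bsub>V\<^esub> (c1 \<oplus> c2) \<odot>\<^bsub>V\<^esub> x"
      using 1 2 Ksub x V.mh_add by (simp add: subset_iff)
    moreover have "v \<oplus>\<^bsub>E\<^esub> u = (c1 \<oplus> c2) \<odot>\<^bsub>E\<^esub> e0"
      using 1 2 e0 smult_l_distr by simp
    moreover have "a1 \<oplus>\<^bsub>V\<^esub> a2 \<in> K" using Kadd 1 2 by blast
    ultimately show "(a \<oplus>\<^bsub>V\<^esub> b, v \<oplus>\<^bsub>E\<^esub> u) \<in> G0" unfolding G0_def using 1 2 by blast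
  next
    fix r a v assume r: "r \<in> carrier R" and "(a, v) \<in> G0"
    then obtain a1 c1 where 1: "a1 \<in> K" "c1 \<in> carrier R" "a = a1 \<oplus>\<^bsub>V\<^esub> c1 \<odot>\<^bsub>V\<^esub> x" "v = c1 \<odot>\<^bsub>E\<^esub> e0"
      unfolding G0_def by blast
    have "r \<odot>\<^bsub>V\<^esub> a = r \<odot>\<^bsub>V\<^esub> a1 \<oplus>\<^bsub>V\<^esub> (r \<otimes> c1) \<odot>\<^bsub>V\<^esub> x"
      using 1 r Ksub x V.mh_smult by (simp add: subset_iff)
    moreover have "r \<odot>\<^bsub>E\<^esub> v = (r \<otimes> c1) \<odot>\<^bsub>E\<^esub> e0"
      using 1 r e0 smult_assoc1 by simp
    moreover have "r \<odot>\<^bsub>V\<^esub> a1 \<in> K" using Ksm 1 r by blast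
    ultimately show "(r \<odot>\<^bsub>V\<^esub> a, r \<odot>\<^bsub>E\<^esub> v) \<in> G0" unfolding G0_def using 1 r by blast
  next
    fix v assume "(\<zero>\<^bsub>V\<^esub>, v) \<in> G0"
    then obtain a1 c1 where 1: "a1 \<in> K" "c1 \<in> carrier R" "\<zero>\<^bsub>V\<^esub> = a1 \<oplus>\<^bsub>V\<^esub> c1 \<odot>\<^bsub>V\<^esub> x" "v = c1 \<odot>\<^bsub>E\<^esub> e0"
      unfolding G0_def by blast
    have a1: "a1 \<in> carrier V" using 1 Ksub by blast
    have cw: "c1 \<odot>\<^bsub>V\<^esub> x = \<ominus>\<^bsub>V\<^esub> a1"
      using 1(3) a1 x 1(2) by (metis V.M.add.inv_equality V.M.a_comm V.smult_closed)
    then have cK: "c1 \<odot>\<^bsub>V\<^esub> x \<in> K" using Kinv 1(1) by simp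
    have "c1 \<in> m"
    proof (rule ccontr)
      assume "c1 \<notin> m"
      then have u: "c1 \<in> Units R" using notm_unit 1(2) by blast
      then have "inv c1 \<odot>\<^bsub>V\<^esub> (c1 \<odot>\<^bsub>V\<^esub> x) \<in> K" using Ksm cK by blast
      moreover have "inv c1 \<odot>\<^bsub>V\<^esub> (c1 \<odot>\<^bsub>V\<^esub> x) = x"
        using u x 1(2) V.smult_assoc1[symmetric, of "inv c1" c1 x] by simp
      ultimately show False using xK by simp
    qed
    then show "v = \<zero>\<^bsub>E\<^esub>" using 1(4) e0_m by simp
  qed
  define T where "T = {G. lin_graph R V E G \<and> G0 \<subseteq> G}"
  have "\<exists>M\<in>T. \<forall>G\<in>T. M \<subseteq> G \<longrightarrow> G = M"
  proof (rule subset_Zorn)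
    fix C assume C: "subset.chain T C"
    show "\<exists>U\<in>T. \<forall>G\<in>C. G \<subseteq> U"
    proof (cases "C = {}")
      case True
      have "G0 \<in> T" unfolding T_def using lg0 by blast
      then show ?thesis using True by blast
    next
      case False
      have CT: "C \<subseteq> T" using C by (simp add: pred_on.chain_def)
      have "subset.chain {G. lin_graph R V E G} C" using C CT unfolding pred_on.chain_def T_def by blast
      then have "lin_graph R V E (\<Union>C)" using lin_graph_Union False by blast
      moreover have "G0 \<subseteq> \<Union>C" using False CT unfolding T_def by blast
      ultimately have "\<Union>C \<in> T" unfolding T_def by blast
      then show ?thesis by blast
    qed
  qed
  then obtain Gm where Gm: "Gm \<in> T" and Gmax: "\<And>G. G \<in> T \<Longrightarrow> Gm \<subseteq> G \<Longrightarrow> G = Gm" by blast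
  have lgm: "lin_graph R V E Gm" and G0m: "G0 \<subseteq> Gm" using Gm unfolding T_def by blast+
  have tot: "\<exists>v. (y,v) \<in> Gm" if y: "y \<in> carrier V" for y
  proof (rule ccontr)
    assume "\<nexists>v. (y, v) \<in> Gm"
    then obtain G' where G': "lin_graph R V E G'" "Gm \<subseteq> G'" "G' \<noteq> Gm"
      using lin_graph_extend[OF V lgm y] by blast
    then have "G' \<in> T" using G0m unfolding T_def by blast
    then show False using Gmax G' by blast
  qed
  have Gsub: "Gm \<subseteq> carrier V \<times> carrier E" 
    and Gadd: "\<And>a v b u. (a,v)\<in>Gm \<Longrightarrow> (b,u)\<in>Gm \<Longrightarrow> (a \<oplus>\<^bsub>V\<^esub> b, v \<oplus>\<^bsub>E\<^esub> u) \<in> Gm"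
    and Gsm: "\<And>r a v. r \<in> carrier R \<Longrightarrow> (a,v)\<in>Gm \<Longrightarrow> (r \<odot>\<^bsub>V\<^esub> a, r \<odot>\<^bsub>E\<^esub> v) \<in> Gm"
    using lgm unfolding lin_graph_def by blast+
  have Gfun: "\<And>a v u. (a,v)\<in>Gm \<Longrightarrow> (a,u)\<in>Gm \<Longrightarrow> v = u" using lin_graph_fun[OF V lgm] by blast
  define H where "H y = (THE v. (y,v) \<in> Gm)" for y
  have HG: "(y, H y) \<in> Gm" if yV: "y \<in> carrier V" for y
  proof -
    obtain v where v: "(y,v) \<in> Gm" using tot[OF yV] by blast
    have "H y = v" unfolding H_def using v Gfun by blast
    then show ?thesis using v by simp
  qed
  have Hv: "H y = v" if "(y,v) \<in> Gm" for y v
  proof -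
    have "y \<in> carrier V" using that Gsub by blast
    then show ?thesis using HG that Gfun by blast
  qed
  show ?thesis
  proof (intro exI conjI ballI)
    fix y assume "y \<in> carrier V" then show "H y \<in> carrier E" using HG Gsub by blast
  next
    fix y z assume "y \<in> carrier V" "z \<in> carrier V"
    then show "H (y \<oplus>\<^bsub>V\<^esub> z) = H y \<oplus>\<^bsub>E\<^esub> H z" using HG Gadd Hv by blast
  next
    fix r y assume "r \<in> carrier R" "y \<in> carrier V"
    then show "H (r \<odot>\<^bsub>V\<^esub> y) = r \<odot>\<^bsub>E\<^esub> H y" using HG Gsm Hv by blast
  next
    fix k assume k: "k \<in> K"
    have "(k \<oplus>\<^bsub>V\<^esub> \<zero> \<odot>\<^bsub>V\<^esub> x, \<zero> \<odot>\<^bsub>E\<^esub> e0) \<in> G0" unfolding G0_def using k by blast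
    then have "(k, \<zero>\<^bsub>E\<^esub>) \<in> Gm" using G0m k Ksub x e0 by (auto simp: subset_iff)
    then show "H k = \<zero>\<^bsub>E\<^esub>" using Hv by blast
  next
    have "(\<zero>\<^bsub>V\<^esub> \<oplus>\<^bsub>V\<^esub> \<one> \<odot>\<^bsub>V\<^esub> x, \<one> \<odot>\<^bsub>E\<^esub> e0) \<in> G0" unfolding G0_def using K0 by blast
    then have "(x, e0) \<in> Gm" using G0m x e0 by auto
    then show "H x = e0" using Hv by blast
  qed
qed


lemma BT:
  assumes J: "ideal J R" and r: "r \<in> carrier R" "r \<notin> J"
  shows "\<exists>u\<in>carrier E. (\<forall>j\<in>J. j \<odot>\<^bsub>E\<^esub> u = \<zero>\<^bsub>E\<^esub>) \<and> r \<odot>\<^bsub>E\<^esub> u = e0"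
proof -
  have Jc: "J \<subseteq> carrier R" using ideal.Icarr[OF J] by (rule subsetI)
  have "submodule J R (RM R)"
  proof (rule module.submodule_by_closure[OF RM_module])
    show "J \<subseteq> carrier (RM R)" using Jc by simp
    have "\<zero> \<in> J" by (rule additive_subgroup.zero_closed[OF ideal.axioms(1)[OF J]])
    then show "\<zero>\<^bsub>RM R\<^esub> \<in> J" by simp
    fix a b assume "a \<in> J" "b \<in> J"
    then have "a \<oplus> b \<in> J" by (rule additive_subgroup.a_closed[OF ideal.axioms(1)[OF J]])
    then show "a \<oplus>\<^bsub>RM R\<^esub> b \<in> J" by simp
  next
    fix a x assume "a \<in> carrier R" "x \<in> J"
    then have "a \<otimes> x \<in> J" using ideal.I_l_closed[OF J] by blast
    then show "a \<odot>\<^bsub>RM R\<^esub> x \<in> J" by simp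
  qed
  have rr: "r \<in> carrier (RM R)" using r(1) by simp
  obtain H where Hc0: "\<forall>y\<in>carrier (RM R). H y \<in> carrier E"
    and Hs0: "\<forall>a\<in>carrier R. \<forall>y\<in>carrier (RM R). H (a \<odot>\<^bsub>RM R\<^esub> y) = a \<odot>\<^bsub>E\<^esub> H y"
    and HJ: "\<forall>k\<in>J. H k = \<zero>\<^bsub>E\<^esub>" and Hr: "H r = e0"
    using cogen[OF RM_module \<open>submodule J R (RM R)\<close> rr r(2)] by blast
  have Hc: "\<forall>y\<in>carrier R. H y \<in> carrier E" using Hc0 by simp
  have Hs: "\<forall>a\<in>carrier R. \<forall>y\<in>carrier R. H (a \<otimes> y) = a \<odot>\<^bsub>E\<^esub> H y" using Hs0 by simp
  have Hz: "H z = z \<odot>\<^bsub>E\<^esub> H \<one>" if z: "z \<in> carrier R" for z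
  proof -
    have "H (z \<otimes> \<one>) = z \<odot>\<^bsub>E\<^esub> H \<one>" using Hs[rule_format, OF z one_closed] .
    then show ?thesis using z by simp
  qed
  show ?thesis
  proof (intro bexI conjI ballI)
    show "H \<one> \<in> carrier E" using Hc by simp
    fix j assume j: "j \<in> J"
    then have "j \<in> carrier R" using Jc by blast
    then have "H j = j \<odot>\<^bsub>E\<^esub> H \<one>" by (rule Hz)
    then show "j \<odot>\<^bsub>E\<^esub> H \<one> = \<zero>\<^bsub>E\<^esub>" using HJ j by simp
  next
    have "H r = r \<odot>\<^bsub>E\<^esub> H \<one>" by (rule Hz[OF r(1)])
    then show "r \<odot>\<^bsub>E\<^esub> H \<one> = e0" using Hr by simp
  qed
qed

lemma faithful:
  assumes a: "a \<in> carrier R" and ann: "\<And>u. u \<in> carrier E \<Longrightarrow> a \<odot>\<^bsub>E\<^esub> u = \<zero>\<^bsub>E\<^esub>"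
  shows "a = \<zero>"
proof (rule ccontr)
  assume "a \<noteq> \<zero>"
  then have "a \<notin> {\<zero>}" by simp
  then obtain u where "u \<in> carrier E" "a \<odot>\<^bsub>E\<^esub> u = e0" using BT[OF zeroideal a] by blast
  then show False using ann e0_nz by simp
qed


lemma cyc_submodule:
  assumes v: "v \<in> carrier E"
  shows "submodule {c \<odot>\<^bsub>E\<^esub> v | c. c \<in> carrier R} R E"
proof (rule submodule_by_closure)
  show "{c \<odot>\<^bsub>E\<^esub> v | c. c \<in> carrier R} \<subseteq> carrier E" using v by auto
  have "\<zero> \<odot>\<^bsub>E\<^esub> v = \<zero>\<^bsub>E\<^esub>" using v by simp
  then show "\<zero>\<^bsub>E\<^esub> \<in> {c \<odot>\<^bsub>E\<^esub> v | c. c \<in> carrier R}" by force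
next
  fix a b assume "a \<in> {c \<odot>\<^bsub>E\<^esub> v | c. c \<in> carrier R}" "b \<in> {c \<odot>\<^bsub>E\<^esub> v | c. c \<in> carrier R}"
  then obtain c d where cd: "c \<in> carrier R" "d \<in> carrier R" "a = c \<odot>\<^bsub>E\<^esub> v" "b = d \<odot>\<^bsub>E\<^esub> v" by blast
  then have "a \<oplus>\<^bsub>E\<^esub> b = (c \<oplus> d) \<odot>\<^bsub>E\<^esub> v" using v by (simp add: smult_l_distr)
  then show "a \<oplus>\<^bsub>E\<^esub> b \<in> {c \<odot>\<^bsub>E\<^esub> v | c. c \<in> carrier R}" using cd by blast
next
  fix a x assume "a \<in> carrier R" "x \<in> {c \<odot>\<^bsub>E\<^esub> v | c. c \<in> carrier R}"
  then obtain c where c: "c \<in> carrier R" "x = c \<odot>\<^bsub>E\<^esub> v" by blast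
  then have "a \<odot>\<^bsub>E\<^esub> x = (a \<otimes> c) \<odot>\<^bsub>E\<^esub> v" using v \<open>a \<in> carrier R\<close> by (simp add: smult_assoc1)
  then show "a \<odot>\<^bsub>E\<^esub> x \<in> {c \<odot>\<^bsub>E\<^esub> v | c. c \<in> carrier R}" using c \<open>a \<in> carrier R\<close> by blast
qed

lemma ess_cyc:
  assumes v: "v \<in> carrier E" "v \<noteq> \<zero>\<^bsub>E\<^esub>"
  shows "\<exists>r c. r \<in> carrier R \<and> c \<in> carrier R \<and> r \<odot>\<^bsub>E\<^esub> e0 = c \<odot>\<^bsub>E\<^esub> v \<and> r \<odot>\<^bsub>E\<^esub> e0 \<noteq> \<zero>\<^bsub>E\<^esub>"
proof -
  have "v \<in> {c \<odot>\<^bsub>E\<^esub> v | c. c \<in> carrier R}" using v smult_one[of v] one_closed by force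
  then have "{c \<odot>\<^bsub>E\<^esub> v | c. c \<in> carrier R} \<noteq> {\<zero>\<^bsub>E\<^esub>}" using v(2) by blast
  then obtain r where "r \<in> carrier R" "r \<odot>\<^bsub>E\<^esub> e0 \<in> {c \<odot>\<^bsub>E\<^esub> v | c. c \<in> carrier R}" "r \<odot>\<^bsub>E\<^esub> e0 \<noteq> \<zero>\<^bsub>E\<^esub>"
    using ess[OF cyc_submodule[OF v(1)]] by blast
  then show ?thesis by blast
qed

lemma socle:
  assumes v: "v \<in> carrier E" and mv: "\<And>y. y \<in> m \<Longrightarrow> y \<odot>\<^bsub>E\<^esub> v = \<zero>\<^bsub>E\<^esub>"
  shows "\<exists>c\<in>carrier R. v = c \<odot>\<^bsub>E\<^esub> e0"
proof (cases "v = \<zero>\<^bsub>E\<^esub>")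
  case True
  then show ?thesis using e0 by (intro bexI[of _ \<zero>]) simp_all
next
  case False
  obtain r c where rc: "r \<in> carrier R" "c \<in> carrier R" "r \<odot>\<^bsub>E\<^esub> e0 = c \<odot>\<^bsub>E\<^esub> v" "r \<odot>\<^bsub>E\<^esub> e0 \<noteq> \<zero>\<^bsub>E\<^esub>"
    using ess_cyc[OF v False] by blast
  have "c \<notin> m" using mv rc by auto
  then have u: "c \<in> Units R" using notm_unit rc(2) by blast
  have "(inv c \<otimes> r) \<odot>\<^bsub>E\<^esub> e0 = inv c \<odot>\<^bsub>E\<^esub> (c \<odot>\<^bsub>E\<^esub> v)"
    using rc u e0 by (simp add: smult_assoc1)
  also have "\<dots> = v" using u v rc(2) smult_assoc1[symmetric, of "inv c" c v] by simp
  finally show ?thesis using u rc(1) by (intro bexI[of _ "inv c \<otimes> r"]) auto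
qed


lemma ann1_ideal:
  assumes v: "v \<in> carrier E" shows "ideal (annihilator R E {v}) R"
proof (rule ideal_by_closure)
  show "annihilator R E {v} \<subseteq> carrier R" unfolding annihilator_def by blast
  show "\<zero> \<in> annihilator R E {v}" unfolding annihilator_def using v by simp
  fix a b assume "a \<in> annihilator R E {v}" "b \<in> annihilator R E {v}"
  then show "a \<oplus> b \<in> annihilator R E {v}" unfolding annihilator_def using v by (simp add: smult_l_distr)
next
  fix a x assume "a \<in> annihilator R E {v}" "x \<in> carrier R"
  then show "x \<otimes> a \<in> annihilator R E {v}" unfolding annihilator_def using v by (simp add: smult_assoc1)
qed

lemma nilpotent_on:
  assumes e: "e \<in> carrier E" and y: "y \<in> m"
  shows "\<exists>k. (y [^] (k::nat)) \<odot>\<^bsub>E\<^esub> e = \<zero>\<^bsub>E\<^esub>"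
proof (rule ccontr)
  assume nz: "\<not> ?thesis"
  have yc: "y \<in> carrier R" using y m_sub by blast
  define A where "A i = annihilator R E {(y [^] (i::nat)) \<odot>\<^bsub>E\<^esub> e}" for i
  have Aid: "ideal (A i) R" for i unfolding A_def by (rule ann1_ideal) (use e yc in simp)
  have Amono: "A i \<subseteq> A (Suc i)" for i
  proof
    fix c assume c: "c \<in> A i"
    then have cc: "c \<in> carrier R" and c0: "c \<odot>\<^bsub>E\<^esub> ((y [^] i) \<odot>\<^bsub>E\<^esub> e) = \<zero>\<^bsub>E\<^esub>" unfolding A_def annihilator_def by auto
    have "c \<odot>\<^bsub>E\<^esub> ((y [^] Suc i) \<odot>\<^bsub>E\<^esub> e) = y \<odot>\<^bsub>E\<^esub> (c \<odot>\<^bsub>E\<^esub> ((y [^] i) \<odot>\<^bsub>E\<^esub> e))"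
      using cc yc e by (simp add: smult_assoc1[symmetric] m_ac)
    also have "\<dots> = \<zero>\<^bsub>E\<^esub>" using c0 yc by simp
    finally show "c \<in> A (Suc i)" unfolding A_def annihilator_def using cc by simp
  qed
  have "range A \<noteq> {}" "range A \<subseteq> {I. ideal I R}" using Aid by auto
  then obtain K where K: "K \<in> range A" and Kmax: "\<forall>J\<in>range A. K \<subseteq> J \<longrightarrow> J = K"
    using noetherian_ring.maximal_principle[OF noeth] by metis
  then obtain k where k: "K = A k" by blast
  have eqk: "A (Suc k) = A k" using Kmax Amono k by blast
  let ?v = "(y [^] k) \<odot>\<^bsub>E\<^esub> e"
  have v: "?v \<in> carrier E" "?v \<noteq> \<zero>\<^bsub>E\<^esub>" using nz e yc by auto
  obtain r c where rc: "r \<in> carrier R" "c \<in> carrier R" "r \<odot>\<^bsub>E\<^esub> e0 = c \<odot>\<^bsub>E\<^esub> ?v" "r \<odot>\<^bsub>E\<^esub> e0 \<noteq> \<zero>\<^bsub>E\<^esub>"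
    using ess_cyc[OF v] by blast
  have "y \<otimes> r \<in> m" using ideal.I_r_closed[OF m_ideal y rc(1)] .
  then have "(y \<otimes> r) \<odot>\<^bsub>E\<^esub> e0 = \<zero>\<^bsub>E\<^esub>" by (rule e0_m)
  then have "y \<odot>\<^bsub>E\<^esub> (c \<odot>\<^bsub>E\<^esub> ?v) = \<zero>\<^bsub>E\<^esub>" using rc yc e0 by (simp add: smult_assoc1)
  moreover have "y \<odot>\<^bsub>E\<^esub> (c \<odot>\<^bsub>E\<^esub> ?v) = c \<odot>\<^bsub>E\<^esub> ((y [^] Suc k) \<odot>\<^bsub>E\<^esub> e)"
    using rc yc e by (simp add: smult_assoc1[symmetric] m_ac)
  ultimately have "c \<in> A (Suc k)" unfolding A_def annihilator_def using rc(2) by simp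
  then have "c \<in> A k" using eqk by simp
  then have "c \<odot>\<^bsub>E\<^esub> ?v = \<zero>\<^bsub>E\<^esub>" unfolding A_def annihilator_def by simp
  then show False using rc by simp
qed


lemma cringR: "cring R" by (rule is_cring)

lemma mpow_ideal: "ideal (ideal_pow R m k) R" by (rule ideal_pow_ideal[OF cringR m_ideal])
lemma mpow_sub: "ideal_pow R m k \<subseteq> carrier R" using ideal.Icarr[OF mpow_ideal] by (rule subsetI)
lemma mpow_mono: "k \<le> n \<Longrightarrow> ideal_pow R m n \<subseteq> ideal_pow R m k" by (rule ideal_pow_mono[OF cringR m_ideal])

lemma torsion:
  assumes e: "e \<in> carrier E"
  shows "\<exists>k. e \<in> killed E (ideal_pow R m k)"
proof -
  define Q where "Q i = {c \<in> carrier R. \<forall>a\<in>ideal_pow R m i. (c \<otimes> a) \<odot>\<^bsub>E\<^esub> e = \<zero>\<^bsub>E\<^esub>}" for i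
  have Qid: "ideal (Q i) R" for i
  proof (rule ideal_by_closure)
    show "Q i \<subseteq> carrier R" unfolding Q_def by blast
    show "\<zero> \<in> Q i" unfolding Q_def using e mpow_sub by (auto simp: subset_iff)
    fix a b assume "a \<in> Q i" "b \<in> Q i"
    then show "a \<oplus> b \<in> Q i" unfolding Q_def using e mpow_sub by (auto simp: l_distr smult_l_distr subset_iff)
  next
    fix a x assume "a \<in> Q i" "x \<in> carrier R"
    then show "x \<otimes> a \<in> Q i" unfolding Q_def using e mpow_sub by (auto simp: m_assoc smult_assoc1 subset_iff)
  qed
  have Qmono: "Q i \<subseteq> Q (Suc i)" for i
    using mpow_mono[of i "Suc i"] unfolding Q_def by auto
  have "range Q \<noteq> {}" "range Q \<subseteq> {I. ideal I R}" using Qid by auto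
  then obtain K where K: "K \<in> range Q" and Kmax: "\<forall>J\<in>range Q. K \<subseteq> J \<longrightarrow> J = K"
    using noetherian_ring.maximal_principle[OF noeth] by metis
  then obtain k where k: "K = Q k" by blast
  have eqk: "Q (Suc k) = Q k" using Kmax Qmono k by blast
  have "\<one> \<in> Q k"
  proof (rule ccontr)
    assume one: "\<one> \<notin> Q k"
    define col where "col z = {c \<in> carrier R. c \<otimes> z \<in> Q k}" for z
    have colid: "ideal (col z) R" if z: "z \<in> carrier R" for z
    proof (rule ideal_by_closure)
      show "col z \<subseteq> carrier R" unfolding col_def by blast
      show "\<zero> \<in> col z" unfolding col_def using z additive_subgroup.zero_closed[OF ideal.axioms(1)[OF Qid]] by simp
      fix a b assume "a \<in> col z" "b \<in> col z"
      then show "a \<oplus> b \<in> col z" unfolding col_def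
        using z additive_subgroup.a_closed[OF ideal.axioms(1)[OF Qid]] by (simp add: l_distr)
    next
      fix a x assume "a \<in> col z" "x \<in> carrier R"
      then show "x \<otimes> a \<in> col z" unfolding col_def
        using z ideal.I_l_closed[OF Qid] by (simp add: m_assoc)
    qed
    define G where "G = {col z | z. z \<in> carrier R \<and> z \<notin> Q k}"
    have "col \<one> \<in> G" unfolding G_def using one by blast
    then have "G \<noteq> {}" by blast
    moreover have "G \<subseteq> {I. ideal I R}" unfolding G_def using colid by blast
    ultimately obtain P where P: "P \<in> G" and Pmax: "\<forall>J\<in>G. P \<subseteq> J \<longrightarrow> J = P"
      using noetherian_ring.maximal_principle[OF noeth] by metis
    then obtain z0 where z0: "z0 \<in> carrier R" "z0 \<notin> Q k" "P = col z0" unfolding G_def by blast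
    have oneP: "\<one> \<notin> P" using z0 unfolding col_def by simp
    have prime: "a \<in> P" if ab: "a \<in> carrier R" "b \<in> carrier R" "a \<otimes> b \<in> P" "b \<notin> P" for a b
    proof -
      have bz: "b \<otimes> z0 \<in> carrier R" "b \<otimes> z0 \<notin> Q k" using ab z0 unfolding col_def by auto
      then have G1: "col (b \<otimes> z0) \<in> G" unfolding G_def by blast
      have "P \<subseteq> col (b \<otimes> z0)"
      proof
        fix c assume "c \<in> P"
        then have c: "c \<in> carrier R" "c \<otimes> z0 \<in> Q k" using z0 unfolding col_def by auto
        then have "b \<otimes> (c \<otimes> z0) \<in> Q k" using ideal.I_l_closed[OF Qid] ab(2) by blast
        then show "c \<in> col (b \<otimes> z0)" unfolding col_def using c ab(2) z0 by (simp add: m_ac)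
      qed
      then have eq: "col (b \<otimes> z0) = P" using Pmax G1 by blast
      have "(a \<otimes> b) \<otimes> z0 \<in> Q k" using ab(3) z0 unfolding col_def by simp
      then have "a \<in> col (b \<otimes> z0)" unfolding col_def using ab z0 by (simp add: m_assoc)
      then show ?thesis using eq by simp
    qed
    have "\<not> m \<subseteq> P"
    proof
      assume mP: "m \<subseteq> P"
      have "\<forall>a\<in>ideal_pow R m (Suc k). (z0 \<otimes> a) \<odot>\<^bsub>E\<^esub> e = \<zero>\<^bsub>E\<^esub>"
      proof
        fix a assume "a \<in> ideal_pow R m (Suc k)"
        then have "a \<in> ideal_prod R (ideal_pow R m k) m" by simp
        then show "(z0 \<otimes> a) \<odot>\<^bsub>E\<^esub> e = \<zero>\<^bsub>E\<^esub>"
        proof (induction a rule: ideal_prod.induct)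
          case (prod i j)
          have ic: "i \<in> carrier R" using prod(1) mpow_sub by blast
          have jc: "j \<in> carrier R" using prod(2) m_sub by blast
          have "j \<otimes> z0 \<in> Q k" using mP prod(2) z0 unfolding col_def by blast
          then have "((j \<otimes> z0) \<otimes> i) \<odot>\<^bsub>E\<^esub> e = \<zero>\<^bsub>E\<^esub>" using prod(1) unfolding Q_def by blast
          moreover have "(j \<otimes> z0) \<otimes> i = z0 \<otimes> (i \<otimes> j)" using ic jc z0 by (simp add: m_ac)
          ultimately show ?case by simp
        next
          case (sum s1 s2)
          have "s1 \<in> carrier R" "s2 \<in> carrier R"
            using sum(1,2) ideal_prod_in_carrier[OF mpow_ideal m_ideal] by blast+
          then show ?case using sum(3,4) z0 e by (simp add: r_distr smult_l_distr)
        qed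
      qed
      then have "z0 \<in> Q (Suc k)" unfolding Q_def using z0 by blast
      then show False using eqk z0 by simp
    qed
    then obtain y where y: "y \<in> m" "y \<notin> P" by blast
    have yc: "y \<in> carrier R" using y m_sub by blast
    obtain j where j: "(y [^] (j::nat)) \<odot>\<^bsub>E\<^esub> e = \<zero>\<^bsub>E\<^esub>" using nilpotent_on[OF e y(1)] by blast
    have "y [^] j \<in> Q k" unfolding Q_def
    proof (intro CollectI conjI ballI)
      show "y [^] j \<in> carrier R" using yc by simp
      fix a assume "a \<in> ideal_pow R m k"
      then have ac: "a \<in> carrier R" using mpow_sub by blast
      have "(y [^] j \<otimes> a) \<odot>\<^bsub>E\<^esub> e = a \<odot>\<^bsub>E\<^esub> ((y [^] j) \<odot>\<^bsub>E\<^esub> e)"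
        using ac yc e by (simp add: smult_assoc1[symmetric] m_comm)
      then show "(y [^] j \<otimes> a) \<odot>\<^bsub>E\<^esub> e = \<zero>\<^bsub>E\<^esub>" using j ac by simp
    qed
    then have "y [^] j \<in> P" using z0 ideal.I_r_closed[OF Qid] yc unfolding col_def by simp
    moreover have "y [^] n \<in> P \<Longrightarrow> False" for n :: nat
    proof (induction n)
      case 0 then show ?case using oneP by simp
    next
      case (Suc n)
      have "y [^] n \<otimes> y \<in> P" using Suc(2) by simp
      then have "y [^] n \<in> P" using prime[of "y [^] n" y] yc y(2) by simp
      then show ?case by (rule Suc.IH)
    qed
    ultimately show False by blast
  qed
  then have "\<forall>a\<in>ideal_pow R m k. a \<odot>\<^bsub>E\<^esub> e = \<zero>\<^bsub>E\<^esub>" unfolding Q_def using mpow_sub by (auto simp: subset_iff)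
  then show ?thesis unfolding killed_def using e by blast
qed


lemma smult_comm:
  assumes "a \<in> carrier R" "b \<in> carrier R" "u \<in> carrier E"
  shows "a \<odot>\<^bsub>E\<^esub> (b \<odot>\<^bsub>E\<^esub> u) = b \<odot>\<^bsub>E\<^esub> (a \<odot>\<^bsub>E\<^esub> u)"
proof -
  have "a \<odot>\<^bsub>E\<^esub> (b \<odot>\<^bsub>E\<^esub> u) = (a \<otimes> b) \<odot>\<^bsub>E\<^esub> u" using smult_assoc1[OF assms] by simp
  also have "\<dots> = (b \<otimes> a) \<odot>\<^bsub>E\<^esub> u" using m_comm assms by simp
  also have "\<dots> = b \<odot>\<^bsub>E\<^esub> (a \<odot>\<^bsub>E\<^esub> u)" using smult_assoc1[OF assms(2,1,3)] by simp
  finally show ?thesis .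
qed

lemma killed_sub: "killed E J \<subseteq> carrier E" unfolding killed_def by blast

lemma killed_zero: "J \<subseteq> carrier R \<Longrightarrow> \<zero>\<^bsub>E\<^esub> \<in> killed E J"
  unfolding killed_def by (auto simp: subset_iff)

lemma killed_add: "J \<subseteq> carrier R \<Longrightarrow> u \<in> killed E J \<Longrightarrow> v \<in> killed E J \<Longrightarrow> u \<oplus>\<^bsub>E\<^esub> v \<in> killed E J"
  unfolding killed_def by (auto simp: subset_iff smult_r_distr)

lemma killed_smult: "J \<subseteq> carrier R \<Longrightarrow> r \<in> carrier R \<Longrightarrow> u \<in> killed E J \<Longrightarrow> r \<odot>\<^bsub>E\<^esub> u \<in> killed E J"
proof -
  assume J: "J \<subseteq> carrier R" and r: "r \<in> carrier R" and u: "u \<in> killed E J"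
  have uc: "u \<in> carrier E" and uk: "\<And>j. j \<in> J \<Longrightarrow> j \<odot>\<^bsub>E\<^esub> u = \<zero>\<^bsub>E\<^esub>" using u unfolding killed_def by auto
  have "j \<odot>\<^bsub>E\<^esub> (r \<odot>\<^bsub>E\<^esub> u) = \<zero>\<^bsub>E\<^esub>" if j: "j \<in> J" for j
  proof -
    have jc: "j \<in> carrier R" using J j by blast
    have "j \<odot>\<^bsub>E\<^esub> (r \<odot>\<^bsub>E\<^esub> u) = r \<odot>\<^bsub>E\<^esub> (j \<odot>\<^bsub>E\<^esub> u)"
      using jc r uc by (simp add: smult_assoc1[symmetric] m_comm)
    then show ?thesis using uk[OF j] r by simp
  qed
  then show ?thesis unfolding killed_def using r uc by simp
qed

lemma killed_Idl:
  assumes S: "S \<subseteq> carrier R" shows "killed E (Idl S) = killed E S"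
proof
  show "killed E (Idl S) \<subseteq> killed E S" unfolding killed_def using genideal_self[OF S] by blast
  show "killed E S \<subseteq> killed E (Idl S)"
  proof
    fix u assume u: "u \<in> killed E S"
    then have uc: "u \<in> carrier E" unfolding killed_def by blast
    have "S \<subseteq> annihilator R E {u}" using u unfolding killed_def annihilator_def using S by blast
    then have "Idl S \<subseteq> annihilator R E {u}" using genideal_minimal[OF ann1_ideal[OF uc]] by blast
    then show "u \<in> killed E (Idl S)" unfolding killed_def annihilator_def using uc by blast
  qed
qed

lemma lin_on_mono: "lin_on E \<psi> A U \<Longrightarrow> V \<subseteq> U \<Longrightarrow> lin_on E \<psi> A V"
  unfolding lin_on_def by blast


definition good :: "'a set \<Rightarrow> bool" where
  "good J \<longleftrightarrow> (\<forall>\<psi>. lin_on E \<psi> (carrier R) (killed E J) \<longrightarrow> (\<exists>a\<in>carrier R. \<forall>e\<in>killed E J. \<psi> e = a \<odot>\<^bsub>E\<^esub> e))"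

lemma good_carrier: "good (carrier R)"
  unfolding good_def
proof (intro allI impI)
  fix \<psi> assume lin: "lin_on E \<psi> (carrier R) (killed E (carrier R))"
  have z: "\<zero>\<^bsub>E\<^esub> \<in> killed E (carrier R)" by (rule killed_zero) simp
  have kz: "e = \<zero>\<^bsub>E\<^esub>" if "e \<in> killed E (carrier R)" for e
  proof -
    have "\<one> \<odot>\<^bsub>E\<^esub> e = \<zero>\<^bsub>E\<^esub>" "e \<in> carrier E" using that unfolding killed_def by auto
    then show ?thesis by simp
  qed
  have "\<psi> (\<zero> \<odot>\<^bsub>E\<^esub> \<zero>\<^bsub>E\<^esub>) = \<zero> \<odot>\<^bsub>E\<^esub> \<psi> \<zero>\<^bsub>E\<^esub>" using lin z unfolding lin_on_def by blast
  moreover have "\<psi> \<zero>\<^bsub>E\<^esub> \<in> carrier E" using lin z unfolding lin_on_def by blast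
  ultimately have "\<psi> \<zero>\<^bsub>E\<^esub> = \<zero>\<^bsub>E\<^esub>" by simp
  then have "\<forall>e\<in>killed E (carrier R). \<psi> e = \<zero> \<odot>\<^bsub>E\<^esub> e"
  proof (intro ballI)
    fix e assume "e \<in> killed E (carrier R)" then have "e = \<zero>\<^bsub>E\<^esub>" by (rule kz)
    then show "\<psi> e = \<zero> \<odot>\<^bsub>E\<^esub> e" using \<open>\<psi> \<zero>\<^bsub>E\<^esub> = \<zero>\<^bsub>E\<^esub>\<close> by simp
  qed
  then show "\<exists>a\<in>carrier R. \<forall>e\<in>killed E (carrier R). \<psi> e = a \<odot>\<^bsub>E\<^esub> e" by blast
qed

lemma good_step:
  assumes J: "ideal J R" and oneJ: "\<one> \<notin> J" and x: "x \<in> carrier R" "x \<notin> J"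
    and xm: "\<And>y. y \<in> m \<Longrightarrow> x \<otimes> y \<in> J"
    and g': "good (Idl (insert x J))"
  shows "good J"
  unfolding good_def
proof (intro allI impI)
  fix \<psi> assume lin: "lin_on E \<psi> (carrier R) (killed E J)"
  have Jc: "J \<subseteq> carrier R" using ideal.Icarr[OF J] by (rule subsetI)
  have ixJ: "insert x J \<subseteq> carrier R" using Jc x by blast
  let ?K = "killed E (Idl (insert x J))"
  have K: "?K = {u \<in> killed E J. x \<odot>\<^bsub>E\<^esub> u = \<zero>\<^bsub>E\<^esub>}"
    unfolding killed_Idl[OF ixJ] unfolding killed_def by blast
  have psiE: "\<And>u. u \<in> killed E J \<Longrightarrow> \<psi> u \<in> carrier E"
    and psiadd: "\<And>u v. u \<in> killed E J \<Longrightarrow> v \<in> killed E J \<Longrightarrow> \<psi> (u \<oplus>\<^bsub>E\<^esub> v) = \<psi> u \<oplus>\<^bsub>E\<^esub> \<psi> v"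
    and psism: "\<And>r u. r \<in> carrier R \<Longrightarrow> u \<in> killed E J \<Longrightarrow> \<psi> (r \<odot>\<^bsub>E\<^esub> u) = r \<odot>\<^bsub>E\<^esub> \<psi> u"
    using lin unfolding lin_on_def by blast+
  have "lin_on E \<psi> (carrier R) ?K" by (rule lin_on_mono[OF lin]) (use K in blast)
  then obtain a where a: "a \<in> carrier R" and aK: "\<And>e. e \<in> ?K \<Longrightarrow> \<psi> e = a \<odot>\<^bsub>E\<^esub> e"
    using g' unfolding good_def by blast
  obtain w where w: "w \<in> carrier E" "\<And>j. j \<in> J \<Longrightarrow> j \<odot>\<^bsub>E\<^esub> w = \<zero>\<^bsub>E\<^esub>" "x \<odot>\<^bsub>E\<^esub> w = e0"
    using BT[OF J x] by blast
  have wK: "w \<in> killed E J" unfolding killed_def using w by blast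
  have pw: "\<psi> w \<in> carrier E" using psiE wK by blast
  define v where "v = \<psi> w \<ominus>\<^bsub>E\<^esub> a \<odot>\<^bsub>E\<^esub> w"
  have vc: "v \<in> carrier E" unfolding v_def using pw a w by simp
  have pwv: "\<psi> w = a \<odot>\<^bsub>E\<^esub> w \<oplus>\<^bsub>E\<^esub> v"
    unfolding v_def using pw a w by (simp add: M.minus_eq M.a_ac M.r_neg M.l_neg)
  have "y \<odot>\<^bsub>E\<^esub> v = \<zero>\<^bsub>E\<^esub>" if y: "y \<in> m" for y
  proof -
    have yc: "y \<in> carrier R" using y m_sub by blast
    have "x \<odot>\<^bsub>E\<^esub> (y \<odot>\<^bsub>E\<^esub> w) = (x \<otimes> y) \<odot>\<^bsub>E\<^esub> w" using smult_assoc1[OF x(1) yc w(1)] by simp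
    also have "\<dots> = (y \<otimes> x) \<odot>\<^bsub>E\<^esub> w" using m_comm x yc by simp
    also have "\<dots> = y \<odot>\<^bsub>E\<^esub> (x \<odot>\<^bsub>E\<^esub> w)" using smult_assoc1[OF yc x(1) w(1)] by simp
    also have "\<dots> = \<zero>\<^bsub>E\<^esub>" using w(3) e0_m[OF y] by simp
    finally have "y \<odot>\<^bsub>E\<^esub> w \<in> ?K" unfolding K using killed_smult[OF Jc yc wK] by blast
    then have "\<psi> (y \<odot>\<^bsub>E\<^esub> w) = a \<odot>\<^bsub>E\<^esub> (y \<odot>\<^bsub>E\<^esub> w)" by (rule aK)
    then have "y \<odot>\<^bsub>E\<^esub> \<psi> w = y \<odot>\<^bsub>E\<^esub> (a \<odot>\<^bsub>E\<^esub> w)"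
      using psism[OF yc wK] yc a w by (simp add: smult_assoc1[symmetric] m_comm)
    moreover have "y \<odot>\<^bsub>E\<^esub> v = y \<odot>\<^bsub>E\<^esub> \<psi> w \<ominus>\<^bsub>E\<^esub> y \<odot>\<^bsub>E\<^esub> (a \<odot>\<^bsub>E\<^esub> w)"
      unfolding v_def using yc pw a w by (simp add: M.minus_eq smult_r_distr smult_r_minus)
    ultimately show ?thesis using yc a w by (simp add: M.minus_eq M.r_neg)
  qed
  then obtain b where b: "b \<in> carrier R" "v = b \<odot>\<^bsub>E\<^esub> e0" using socle[OF vc] by blast
  show "\<exists>c\<in>carrier R. \<forall>e\<in>killed E J. \<psi> e = c \<odot>\<^bsub>E\<^esub> e"
  proof (intro bexI ballI)
    show "a \<oplus> b \<otimes> x \<in> carrier R" using a b x by simp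
    fix e assume eK: "e \<in> killed E J"
    have ec: "e \<in> carrier E" using eK killed_sub by blast
    have "y \<odot>\<^bsub>E\<^esub> (x \<odot>\<^bsub>E\<^esub> e) = \<zero>\<^bsub>E\<^esub>" if y: "y \<in> m" for y
    proof -
      have yc: "y \<in> carrier R" using y m_sub by blast
      have "y \<odot>\<^bsub>E\<^esub> (x \<odot>\<^bsub>E\<^esub> e) = (y \<otimes> x) \<odot>\<^bsub>E\<^esub> e" using smult_assoc1[OF yc x(1) ec] by simp
      also have "\<dots> = (x \<otimes> y) \<odot>\<^bsub>E\<^esub> e" using m_comm yc x by simp
      finally have "y \<odot>\<^bsub>E\<^esub> (x \<odot>\<^bsub>E\<^esub> e) = (x \<otimes> y) \<odot>\<^bsub>E\<^esub> e" .
      then show ?thesis using xm[OF y] eK unfolding killed_def by simp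
    qed
    then obtain c where c: "c \<in> carrier R" "x \<odot>\<^bsub>E\<^esub> e = c \<odot>\<^bsub>E\<^esub> e0" using socle[of "x \<odot>\<^bsub>E\<^esub> e"] x ec by auto
    define e' where "e' = e \<oplus>\<^bsub>E\<^esub> (\<ominus> c) \<odot>\<^bsub>E\<^esub> w"
    have e'J: "e' \<in> killed E J" unfolding e'_def
      using killed_add[OF Jc eK killed_smult[OF Jc _ wK]] c by simp
    have "x \<odot>\<^bsub>E\<^esub> e' = x \<odot>\<^bsub>E\<^esub> e \<oplus>\<^bsub>E\<^esub> x \<odot>\<^bsub>E\<^esub> ((\<ominus> c) \<odot>\<^bsub>E\<^esub> w)"
      unfolding e'_def using x ec c w by (simp add: smult_r_distr)
    also have "x \<odot>\<^bsub>E\<^esub> ((\<ominus> c) \<odot>\<^bsub>E\<^esub> w) = (\<ominus> c) \<odot>\<^bsub>E\<^esub> (x \<odot>\<^bsub>E\<^esub> w)"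
      using x c w by (intro smult_comm) auto
    also have "x \<odot>\<^bsub>E\<^esub> e \<oplus>\<^bsub>E\<^esub> (\<ominus> c) \<odot>\<^bsub>E\<^esub> (x \<odot>\<^bsub>E\<^esub> w) = c \<odot>\<^bsub>E\<^esub> e0 \<oplus>\<^bsub>E\<^esub> (\<ominus> c) \<odot>\<^bsub>E\<^esub> e0"
      using c(2) w(3) by simp
    also have "\<dots> = (c \<oplus> \<ominus> c) \<odot>\<^bsub>E\<^esub> e0" using c e0 by (simp add: smult_l_distr)
    also have "\<dots> = \<zero>\<^bsub>E\<^esub>" using c e0 by (simp add: R.r_neg)
    finally have e'K: "e' \<in> ?K" unfolding K using e'J by blast
    have ee': "e = e' \<oplus>\<^bsub>E\<^esub> c \<odot>\<^bsub>E\<^esub> w"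
    proof -
      have "e' \<oplus>\<^bsub>E\<^esub> c \<odot>\<^bsub>E\<^esub> w = e \<oplus>\<^bsub>E\<^esub> ((\<ominus> c) \<odot>\<^bsub>E\<^esub> w \<oplus>\<^bsub>E\<^esub> c \<odot>\<^bsub>E\<^esub> w)"
        unfolding e'_def using ec c w by (simp add: M.a_assoc)
      also have "(\<ominus> c) \<odot>\<^bsub>E\<^esub> w \<oplus>\<^bsub>E\<^esub> c \<odot>\<^bsub>E\<^esub> w = (\<ominus> c \<oplus> c) \<odot>\<^bsub>E\<^esub> w"
        using c w by (simp add: smult_l_distr)
      also have "\<dots> = \<zero>\<^bsub>E\<^esub>" using c w by (simp add: R.l_neg)
      finally show ?thesis using ec by simp
    qed
    have cwK: "c \<odot>\<^bsub>E\<^esub> w \<in> killed E J" by (rule killed_smult[OF Jc c(1) wK])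
    have e'c: "e' \<in> carrier E" using e'J killed_sub by blast
    have "\<psi> e = \<psi> e' \<oplus>\<^bsub>E\<^esub> c \<odot>\<^bsub>E\<^esub> \<psi> w"
      using ee' psiadd[OF e'J cwK] psism[OF c(1) wK] by simp
    also have "\<dots> = a \<odot>\<^bsub>E\<^esub> e' \<oplus>\<^bsub>E\<^esub> (c \<odot>\<^bsub>E\<^esub> (a \<odot>\<^bsub>E\<^esub> w) \<oplus>\<^bsub>E\<^esub> c \<odot>\<^bsub>E\<^esub> v)"
      using aK[OF e'K] pwv c a w vc by (simp add: smult_r_distr)
    also have "\<dots> = (a \<odot>\<^bsub>E\<^esub> e' \<oplus>\<^bsub>E\<^esub> a \<odot>\<^bsub>E\<^esub> (c \<odot>\<^bsub>E\<^esub> w)) \<oplus>\<^bsub>E\<^esub> c \<odot>\<^bsub>E\<^esub> v"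
      using c a w vc e'c by (simp add: M.a_assoc smult_assoc1[symmetric] m_comm)
    also have "\<dots> = a \<odot>\<^bsub>E\<^esub> e \<oplus>\<^bsub>E\<^esub> c \<odot>\<^bsub>E\<^esub> v"
      using ee' a c w e'c by (simp add: smult_r_distr)
    also have "c \<odot>\<^bsub>E\<^esub> v = b \<odot>\<^bsub>E\<^esub> (x \<odot>\<^bsub>E\<^esub> e)"
      using b c e0 by (simp add: smult_assoc1[symmetric] m_comm)
    also have "a \<odot>\<^bsub>E\<^esub> e \<oplus>\<^bsub>E\<^esub> b \<odot>\<^bsub>E\<^esub> (x \<odot>\<^bsub>E\<^esub> e) = (a \<oplus> b \<otimes> x) \<odot>\<^bsub>E\<^esub> e"
      using a b x ec by (simp add: smult_l_distr smult_assoc1)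
    finally show "\<psi> e = (a \<oplus> b \<otimes> x) \<odot>\<^bsub>E\<^esub> e" .
  qed
qed


lemma good_all:
  assumes J: "ideal J R" and n: "ideal_pow R m n \<subseteq> J"
  shows "good J"
proof (rule ccontr)
  assume ng: "\<not> good J"
  define F where "F = {J. ideal J R \<and> (\<exists>n. ideal_pow R m n \<subseteq> J) \<and> \<not> good J}"
  have "J \<in> F" unfolding F_def using J n ng by blast
  then have "F \<noteq> {}" "F \<subseteq> {I. ideal I R}" unfolding F_def by blast+
  then obtain K where K: "K \<in> F" and Kmax: "\<forall>J\<in>F. K \<subseteq> J \<longrightarrow> J = K"
    using noetherian_ring.maximal_principle[OF noeth] by metis
  have Kid: "ideal K R" and Kn: "\<exists>n. ideal_pow R m n \<subseteq> K" and Kng: "\<not> good K" using K unfolding F_def by blast+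
  have Kc: "K \<subseteq> carrier R" using ideal.Icarr[OF Kid] by (rule subsetI)
  have oneK: "\<one> \<notin> K"
  proof
    assume "\<one> \<in> K"
    then have "K = carrier R" by (rule ideal.one_imp_carrier[OF Kid])
    then show False using Kng good_carrier by simp
  qed
  define t where "t = (LEAST t. ideal_pow R m t \<subseteq> K)"
  have t: "ideal_pow R m t \<subseteq> K" unfolding t_def using Kn by (metis LeastI)
  have t0: "t \<noteq> 0"
  proof
    assume "t = 0" then have "carrier R \<subseteq> K" using t by simp
    then show False using oneK by blast
  qed
  then obtain t' where t': "t = Suc t'" by (cases t) auto
  have "\<not> ideal_pow R m t' \<subseteq> K"
  proof
    assume "ideal_pow R m t' \<subseteq> K"
    then have "t \<le> t'" unfolding t_def by (rule Least_le)
    then show False using t' by simp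
  qed
  then obtain x where x: "x \<in> ideal_pow R m t'" "x \<notin> K" by blast
  have xc: "x \<in> carrier R" using x(1) mpow_sub by blast
  have xm: "x \<otimes> y \<in> K" if y: "y \<in> m" for y
  proof -
    have "x \<otimes> y \<in> ideal_prod R (ideal_pow R m t') m" using x(1) y by (rule ideal_prod.prod)
    then show ?thesis using t t' by auto
  qed
  let ?K' = "Idl (insert x K)"
  have iK: "insert x K \<subseteq> carrier R" using Kc xc by blast
  have K'id: "ideal ?K' R" by (rule genideal_ideal[OF iK])
  have KK': "K \<subseteq> ?K'" and xK': "x \<in> ?K'" using genideal_self[OF iK] by blast+
  have "?K' \<notin> F"
  proof
    assume "?K' \<in> F"
    then have "?K' = K" using Kmax KK' by blast
    then show False using xK' x(2) by simp
  qed
  moreover have "\<exists>n. ideal_pow R m n \<subseteq> ?K'" using Kn KK' by blast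
  ultimately have "good ?K'" unfolding F_def using K'id by blast
  then have "good K" using good_step[OF Kid oneK xc x(2) xm] by blast
  then show False using Kng by simp
qed


lemma killed_mono: "k \<le> n \<Longrightarrow> killed E (ideal_pow R m k) \<subseteq> killed E (ideal_pow R m n)"
  using mpow_mono[of k n] unfolding killed_def by blast

lemma ann_killed:
  assumes d: "d \<in> carrier R" and de: "\<And>e. e \<in> killed E (ideal_pow R m k) \<Longrightarrow> d \<odot>\<^bsub>E\<^esub> e = \<zero>\<^bsub>E\<^esub>"
  shows "d \<in> ideal_pow R m k"
proof (rule ccontr)
  assume "d \<notin> ideal_pow R m k"
  then obtain u where u: "u \<in> carrier E" "\<forall>j\<in>ideal_pow R m k. j \<odot>\<^bsub>E\<^esub> u = \<zero>\<^bsub>E\<^esub>" "d \<odot>\<^bsub>E\<^esub> u = e0"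
    using BT[OF mpow_ideal d] by blast
  then have "u \<in> killed E (ideal_pow R m k)" unfolding killed_def by blast
  then show False using de u(3) e0_nz by simp
qed

lemma endo:
  assumes compl: "madic_complete R m" and lin: "lin_on E \<psi> (carrier R) (carrier E)"
  shows "\<exists>a\<in>carrier R. \<forall>e\<in>carrier E. \<psi> e = a \<odot>\<^bsub>E\<^esub> e"
proof -
  have "\<forall>n. \<exists>a. a \<in> carrier R \<and> (\<forall>e\<in>killed E (ideal_pow R m n). \<psi> e = a \<odot>\<^bsub>E\<^esub> e)"
  proof
    fix n
    have "good (ideal_pow R m n)" by (rule good_all[OF mpow_ideal subset_refl])
    moreover have "lin_on E \<psi> (carrier R) (killed E (ideal_pow R m n))"
      by (rule lin_on_mono[OF lin killed_sub])
    ultimately show "\<exists>a. a \<in> carrier R \<and> (\<forall>e\<in>killed E (ideal_pow R m n). \<psi> e = a \<odot>\<^bsub>E\<^esub> e)"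
      unfolding good_def by blast
  qed
  then have "\<exists>A. \<forall>n. A n \<in> carrier R \<and> (\<forall>e\<in>killed E (ideal_pow R m n). \<psi> e = A n \<odot>\<^bsub>E\<^esub> e)"
    by (rule choice)
  then obtain A where A0: "\<forall>n. A n \<in> carrier R \<and> (\<forall>e\<in>killed E (ideal_pow R m n). \<psi> e = A n \<odot>\<^bsub>E\<^esub> e)"
    by (rule exE)
  have A: "\<And>n. A n \<in> carrier R" "\<And>n e. e \<in> killed E (ideal_pow R m n) \<Longrightarrow> \<psi> e = A n \<odot>\<^bsub>E\<^esub> e"
    using A0 by blast+
  have cauchy: "\<forall>k. \<exists>N. \<forall>n n'. N \<le> n \<and> N \<le> n' \<longrightarrow> A n \<ominus> A n' \<in> ideal_pow R m k"
  proof (intro allI)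
    fix k :: nat
    show "\<exists>N. \<forall>n n'. N \<le> n \<and> N \<le> n' \<longrightarrow> A n \<ominus> A n' \<in> ideal_pow R m k"
    proof (intro exI[of _ k] allI impI)
    fix n n' :: nat assume nn: "k \<le> n \<and> k \<le> n'"
    show "A n \<ominus> A n' \<in> ideal_pow R m k"
    proof (rule ann_killed)
      show "A n \<ominus> A n' \<in> carrier R" using A(1) by simp
      fix e assume e: "e \<in> killed E (ideal_pow R m k)"
      have e1: "e \<in> killed E (ideal_pow R m n)" using killed_mono[of k n] nn e by blast
      have e2: "e \<in> killed E (ideal_pow R m n')" using killed_mono[of k n'] nn e by blast
      have "A n \<odot>\<^bsub>E\<^esub> e = A n' \<odot>\<^bsub>E\<^esub> e" using A(2)[OF e1] A(2)[OF e2] by simp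
      moreover have "e \<in> carrier E" using e killed_sub by blast
      ultimately show "(A n \<ominus> A n') \<odot>\<^bsub>E\<^esub> e = \<zero>\<^bsub>E\<^esub>" using smult_diff_zero[OF A(1) A(1)] by simp
    qed
    qed
  qed
  have A1: "\<forall>n. A n \<in> carrier R" using A(1) by simp
  have "\<exists>y\<in>carrier R. \<forall>k. \<exists>N. \<forall>n. N \<le> n \<longrightarrow> A n \<ominus> y \<in> ideal_pow R m k"
    by (rule compl[unfolded madic_complete_def, rule_format]) (rule conjI[OF A1 cauchy])
  then obtain a where a: "a \<in> carrier R" and conv: "\<forall>k. \<exists>N. \<forall>n. N \<le> n \<longrightarrow> A n \<ominus> a \<in> ideal_pow R m k"
    by (rule bexE)
  show ?thesis
  proof (intro bexI ballI)
    fix e assume e: "e \<in> carrier E"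
    obtain k where k: "e \<in> killed E (ideal_pow R m k)" using torsion[OF e] by blast
    obtain N where N: "\<forall>n. N \<le> n \<longrightarrow> A n \<ominus> a \<in> ideal_pow R m k" using conv by blast
    define n where "n = max N k"
    have "A n \<ominus> a \<in> ideal_pow R m k" using N n_def by simp
    then have "(A n \<ominus> a) \<odot>\<^bsub>E\<^esub> e = \<zero>\<^bsub>E\<^esub>" using k unfolding killed_def by blast
    then have "A n \<odot>\<^bsub>E\<^esub> e = a \<odot>\<^bsub>E\<^esub> e" using smult_diff_zero[OF A(1) a e] by simp
    moreover have "e \<in> killed E (ideal_pow R m n)" using killed_mono[of k n] k n_def by auto
    ultimately show "\<psi> e = a \<odot>\<^bsub>E\<^esub> e" using A(2)[of e n] by simp
  qed (rule a)
qed


lemma fdelta_FM: "fdelta R p \<in> carrier (FM R)"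
  unfolding fdelta_def by simp

lemma rel_carrier:
  assumes "F \<in> tensor_relations R L E" shows "F \<in> carrier (FM R)"
  using assms
proof (induction rule: tensor_relations.induct)
  case zero then show ?case by simp
next
  case (add_left x y u) then show ?case by (simp add: fsub_def fdelta_def)
next
  case (add_right x u v) then show ?case by (simp add: fsub_def fdelta_def)
next
  case (smult_left r x u) then show ?case by (simp add: fsub_def fsmult_def fdelta_def)
next
  case (smult_right r x u) then show ?case by (simp add: fsub_def fsmult_def fdelta_def)
next
  case (sum f g) then show ?case by (simp add: fadd_def)
next
  case (scale r f) then show ?case by (simp add: fsmult_def)
qed

lemma rel_submodule: "submodule (tensor_relations R L E) R (FM R)"
proof (rule module.submodule_by_closure[OF FM_module])
  show "tensor_relations R L E \<subseteq> carrier (FM R)" using rel_carrier by blast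
  show "\<zero>\<^bsub>FM R\<^esub> \<in> tensor_relations R L E" using tensor_relations.zero by simp
  show "\<And>a b. a \<in> tensor_relations R L E \<Longrightarrow> b \<in> tensor_relations R L E \<Longrightarrow> a \<oplus>\<^bsub>FM R\<^esub> b \<in> tensor_relations R L E"
    using tensor_relations.sum by simp
  show "\<And>a x. a \<in> carrier R \<Longrightarrow> x \<in> tensor_relations R L E \<Longrightarrow> a \<odot>\<^bsub>FM R\<^esub> x \<in> tensor_relations R L E"
    using tensor_relations.scale by simp
qed

lemma uniq_scalar:
  assumes "a \<in> carrier R" "b \<in> carrier R" "\<And>v. v \<in> carrier E \<Longrightarrow> a \<odot>\<^bsub>E\<^esub> v = b \<odot>\<^bsub>E\<^esub> v"
  shows "a = b"
proof -
  have "a \<ominus> b = \<zero>" using faithful[of "a \<ominus> b"] assms smult_diff_zero by simp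
  then show ?thesis using assms(1,2) by simp
qed


lemma hard_tensor:
  fixes L :: "('a,'l) module"
  assumes compl: "madic_complete R m" and L: "module R L" and s: "s \<in> carrier L" and u: "u \<in> carrier E"
    and uT: "\<And>f. f \<in> lin_functionals R L \<Longrightarrow> f s \<odot>\<^bsub>E\<^esub> u = \<zero>\<^bsub>E\<^esub>"
  shows "tensor_zero R L E s u"
proof (rule ccontr)
  assume nz: "\<not> tensor_zero R L E s u"
  interpret V: module R "FM R :: ('a, 'l \<times> 'e \<Rightarrow> 'a) module" by (rule FM_module)
  interpret LM: module R L by (rule L)
  have nrel: "fdelta R (s,u) \<notin> tensor_relations R L E" using nz unfolding tensor_zero_def by simp
  obtain H where Hc: "\<forall>y\<in>carrier (FM R). H y \<in> carrier E"
    and Ha: "\<forall>y\<in>carrier (FM R). \<forall>z\<in>carrier (FM R). H (y \<oplus>\<^bsub>FM R\<^esub> z) = H y \<oplus>\<^bsub>E\<^esub> H z"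
    and Hs: "\<forall>r\<in>carrier R. \<forall>y\<in>carrier (FM R). H (r \<odot>\<^bsub>FM R\<^esub> y) = r \<odot>\<^bsub>E\<^esub> H y"
    and HK: "\<forall>k\<in>tensor_relations R L E. H k = \<zero>\<^bsub>E\<^esub>" and Hx: "H (fdelta R (s,u)) = e0"
    using cogen[OF FM_module rel_submodule fdelta_FM nrel] by blast
  have Hsub: "H (fsub R A B) = H A \<ominus>\<^bsub>E\<^esub> H B" if A: "A \<in> carrier (FM R)" and B: "B \<in> carrier (FM R)" for A B
  proof -
    have AB: "A \<ominus>\<^bsub>FM R\<^esub> B \<in> carrier (FM R)" using A B by (rule V.M.minus_closed)
    have "(A \<ominus>\<^bsub>FM R\<^esub> B) \<oplus>\<^bsub>FM R\<^esub> B = A"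
      by (simp only: V.M.minus_eq V.M.a_assoc[OF A V.M.a_inv_closed[OF B] B] V.M.l_neg[OF B] V.M.r_zero[OF A])
    moreover have "H ((A \<ominus>\<^bsub>FM R\<^esub> B) \<oplus>\<^bsub>FM R\<^esub> B) = H (A \<ominus>\<^bsub>FM R\<^esub> B) \<oplus>\<^bsub>E\<^esub> H B"
      by (rule Ha[rule_format, OF AB B])
    ultimately have "H A = H (A \<ominus>\<^bsub>FM R\<^esub> B) \<oplus>\<^bsub>E\<^esub> H B" by simp
    then have "H (A \<ominus>\<^bsub>FM R\<^esub> B) = H A \<ominus>\<^bsub>E\<^esub> H B"
      using M.minus_eq_iff[of "H A" "H B" "H (A \<ominus>\<^bsub>FM R\<^esub> B)"] Hc AB A B by simp
    then show ?thesis using FM_minus[OF A B] by simp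
  qed
  have fsubc: "fsub R A B \<in> carrier (FM R)" if "A \<in> carrier (FM R)" "B \<in> carrier (FM R)" for A B
    using that by (simp add: fsub_def)
  have Hd: "H (fdelta R p) \<in> carrier E" for p using Hc fdelta_FM by blast
  have three: "H A = H B \<oplus>\<^bsub>E\<^esub> H C" if rel: "fsub R (fsub R A B) C \<in> tensor_relations R L E"
    and A: "A \<in> carrier (FM R)" and B: "B \<in> carrier (FM R)" and C: "C \<in> carrier (FM R)" for A B C
  proof -
    have hA: "H A \<in> carrier E" and hB: "H B \<in> carrier E" and hC: "H C \<in> carrier E" using Hc A B C by blast+
    have "(H A \<ominus>\<^bsub>E\<^esub> H B) \<ominus>\<^bsub>E\<^esub> H C = \<zero>\<^bsub>E\<^esub>"
      using HK rel Hsub[OF fsubc[OF A B] C] Hsub[OF A B] by simp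
    then have "H A \<ominus>\<^bsub>E\<^esub> H B = H C" by (rule M.minus_zero_eq[OF M.minus_closed[OF hA hB] hC])
    then have "H A = H C \<oplus>\<^bsub>E\<^esub> H B" using M.minus_eq_iff[of "H A" "H B" "H C"] Hc A B C by simp
    then show ?thesis using Hc B C M.a_comm by simp
  qed
  have two: "H A = H B" if rel: "fsub R A B \<in> tensor_relations R L E"
    and A: "A \<in> carrier (FM R)" and B: "B \<in> carrier (FM R)" for A B
  proof -
    have hA: "H A \<in> carrier E" and hB: "H B \<in> carrier E" using Hc A B by blast+
    have "H A \<ominus>\<^bsub>E\<^esub> H B = \<zero>\<^bsub>E\<^esub>" using HK rel Hsub[OF A B] by simp
    then show ?thesis by (rule M.minus_zero_eq[OF hA hB])
  qed
  define \<psi> where "\<psi> y v = H (fdelta R (y,v))" for y v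
  have lin: "lin_on E (\<psi> y) (carrier R) (carrier E)" if y: "y \<in> carrier L" for y
    unfolding lin_on_def
  proof (intro conjI ballI)
    fix v assume "v \<in> carrier E" then show "\<psi> y v \<in> carrier E" unfolding \<psi>_def using Hd by blast
  next
    fix v w assume v: "v \<in> carrier E" and w: "w \<in> carrier E"
    show "\<psi> y (v \<oplus>\<^bsub>E\<^esub> w) = \<psi> y v \<oplus>\<^bsub>E\<^esub> \<psi> y w"
      unfolding \<psi>_def by (rule three[OF tensor_relations.add_right[OF y v w] fdelta_FM fdelta_FM fdelta_FM])
  next
    fix r v assume r: "r \<in> carrier R" and v: "v \<in> carrier E"
    have "H (fdelta R (y, r \<odot>\<^bsub>E\<^esub> v)) = H (fsmult R r (fdelta R (y, v)))"
      by (rule two[OF tensor_relations.smult_right[OF r y v] fdelta_FM]) (use r in \<open>simp add: fsmult_def fdelta_def\<close>)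
    also have "\<dots> = r \<odot>\<^bsub>E\<^esub> H (fdelta R (y, v))" using Hs[rule_format, OF r fdelta_FM] by (simp only: FM_simps(4))
    finally show "\<psi> y (r \<odot>\<^bsub>E\<^esub> v) = r \<odot>\<^bsub>E\<^esub> \<psi> y v" unfolding \<psi>_def .
  qed
  define f where "f y = (SOME a. a \<in> carrier R \<and> (\<forall>v\<in>carrier E. \<psi> y v = a \<odot>\<^bsub>E\<^esub> v))" for y
  have fprop: "f y \<in> carrier R \<and> (\<forall>v\<in>carrier E. \<psi> y v = f y \<odot>\<^bsub>E\<^esub> v)" if y: "y \<in> carrier L" for y
  proof -
    have "\<exists>a. a \<in> carrier R \<and> (\<forall>v\<in>carrier E. \<psi> y v = a \<odot>\<^bsub>E\<^esub> v)" using endo[OF compl lin[OF y]] by blast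
    then show ?thesis unfolding f_def by (rule someI_ex)
  qed
  have fc: "\<And>y. y \<in> carrier L \<Longrightarrow> f y \<in> carrier R" and fv: "\<And>y v. y \<in> carrier L \<Longrightarrow> v \<in> carrier E \<Longrightarrow> \<psi> y v = f y \<odot>\<^bsub>E\<^esub> v"
    using fprop by blast+
  have "f \<in> lin_functionals R L" unfolding lin_functionals_def
  proof (intro CollectI conjI ballI)
    fix x assume "x \<in> carrier L" then show "f x \<in> carrier R" by (rule fc)
  next
    fix x y assume x: "x \<in> carrier L" and y: "y \<in> carrier L"
    have xy: "x \<oplus>\<^bsub>L\<^esub> y \<in> carrier L" using x y by simp
    show "f (x \<oplus>\<^bsub>L\<^esub> y) = f x \<oplus> f y"
    proof (rule uniq_scalar)
      show "f (x \<oplus>\<^bsub>L\<^esub> y) \<in> carrier R" using fc xy .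
      show "f x \<oplus> f y \<in> carrier R" using fc x y by simp
      fix v assume v: "v \<in> carrier E"
      have "\<psi> (x \<oplus>\<^bsub>L\<^esub> y) v = \<psi> x v \<oplus>\<^bsub>E\<^esub> \<psi> y v"
        unfolding \<psi>_def by (rule three[OF tensor_relations.add_left[OF x y v] fdelta_FM fdelta_FM fdelta_FM])
      then show "f (x \<oplus>\<^bsub>L\<^esub> y) \<odot>\<^bsub>E\<^esub> v = (f x \<oplus> f y) \<odot>\<^bsub>E\<^esub> v"
        using fv[OF xy v] fv[OF x v] fv[OF y v] fc x y v by (simp add: smult_l_distr)
    qed
  next
    fix r x assume r: "r \<in> carrier R" and x: "x \<in> carrier L"
    have rx: "r \<odot>\<^bsub>L\<^esub> x \<in> carrier L" using r x by simp
    show "f (r \<odot>\<^bsub>L\<^esub> x) = r \<otimes> f x"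
    proof (rule uniq_scalar)
      show "f (r \<odot>\<^bsub>L\<^esub> x) \<in> carrier R" using fc rx .
      show "r \<otimes> f x \<in> carrier R" using fc x r by simp
      fix v assume v: "v \<in> carrier E"
      have "H (fdelta R (r \<odot>\<^bsub>L\<^esub> x, v)) = H (fsmult R r (fdelta R (x, v)))"
        by (rule two[OF tensor_relations.smult_left[OF r x v] fdelta_FM]) (use r in \<open>simp add: fsmult_def fdelta_def\<close>)
      also have "\<dots> = r \<odot>\<^bsub>E\<^esub> H (fdelta R (x, v))" using Hs[rule_format, OF r fdelta_FM] by (simp only: FM_simps(4))
      finally have "\<psi> (r \<odot>\<^bsub>L\<^esub> x) v = r \<odot>\<^bsub>E\<^esub> \<psi> x v" unfolding \<psi>_def .
      then show "f (r \<odot>\<^bsub>L\<^esub> x) \<odot>\<^bsub>E\<^esub> v = (r \<otimes> f x) \<odot>\<^bsub>E\<^esub> v"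
        using fv[OF rx v] fv[OF x v] fc x r v by (simp add: smult_assoc1)
    qed
  qed
  then have "f s \<odot>\<^bsub>E\<^esub> u = \<zero>\<^bsub>E\<^esub>" by (rule uT)
  moreover have "f s \<odot>\<^bsub>E\<^esub> u = e0" using fv[OF s u] Hx unfolding \<psi>_def by simp
  ultimately show False using e0_nz by simp
qed


definition phi :: "('l \<Rightarrow> 'a) \<Rightarrow> ('l \<times> 'e) set \<Rightarrow> ('l \<times> 'e \<Rightarrow> 'a) \<Rightarrow> 'e" where
  "phi f B F = finsum E (\<lambda>q. (F q \<otimes> f (fst q)) \<odot>\<^bsub>E\<^esub> snd q) B"

context
  fixes L :: "('a,'l) module" and f :: "'l \<Rightarrow> 'a"
  assumes f: "f \<in> lin_functionals R L"
begin

lemma fc: "x \<in> carrier L \<Longrightarrow> f x \<in> carrier R" using f unfolding lin_functionals_def by blast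
lemma fadd_l: "x \<in> carrier L \<Longrightarrow> y \<in> carrier L \<Longrightarrow> f (x \<oplus>\<^bsub>L\<^esub> y) = f x \<oplus> f y"
  using f unfolding lin_functionals_def by blast
lemma fsm_l: "r \<in> carrier R \<Longrightarrow> x \<in> carrier L \<Longrightarrow> f (r \<odot>\<^bsub>L\<^esub> x) = r \<otimes> f x"
  using f unfolding lin_functionals_def by blast

lemma FM_val: "F \<in> carrier (FM R) \<Longrightarrow> F q \<in> carrier R" by simp

lemma term_closed:
  assumes F: "F \<in> carrier (FM R)" and B: "B \<subseteq> carrier L \<times> carrier E"
  shows "(\<lambda>q. (F q \<otimes> f (fst q)) \<odot>\<^bsub>E\<^esub> snd q) \<in> B \<rightarrow> carrier E"
proof
  fix q assume "q \<in> B"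
  then have "fst q \<in> carrier L" "snd q \<in> carrier E" using B by auto
  then show "(F q \<otimes> f (fst q)) \<odot>\<^bsub>E\<^esub> snd q \<in> carrier E" using FM_val[OF F, of q] fc by simp
qed

lemma phi_closed: "F \<in> carrier (FM R) \<Longrightarrow> B \<subseteq> carrier L \<times> carrier E \<Longrightarrow> phi f B F \<in> carrier E"
  unfolding phi_def using term_closed by (rule M.finsum_closed)

lemma phi_add:
  assumes F: "F \<in> carrier (FM R)" and G: "G \<in> carrier (FM R)" and B: "B \<subseteq> carrier L \<times> carrier E"
  shows "phi f B (fadd R F G) = phi f B F \<oplus>\<^bsub>E\<^esub> phi f B G"
proof -
  have "phi f B (fadd R F G) = finsum E (\<lambda>q. (F q \<otimes> f (fst q)) \<odot>\<^bsub>E\<^esub> snd q \<oplus>\<^bsub>E\<^esub> (G q \<otimes> f (fst q)) \<odot>\<^bsub>E\<^esub> snd q) B"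
    unfolding phi_def
  proof (rule M.finsum_cong')
    show "(\<lambda>q. (F q \<otimes> f (fst q)) \<odot>\<^bsub>E\<^esub> snd q \<oplus>\<^bsub>E\<^esub> (G q \<otimes> f (fst q)) \<odot>\<^bsub>E\<^esub> snd q) \<in> B \<rightarrow> carrier E"
      using term_closed[OF F B] term_closed[OF G B] by (auto simp: Pi_def)
    fix q assume "q \<in> B"
    then have q: "fst q \<in> carrier L" "snd q \<in> carrier E" using B by auto
    show "(fadd R F G q \<otimes> f (fst q)) \<odot>\<^bsub>E\<^esub> snd q = (F q \<otimes> f (fst q)) \<odot>\<^bsub>E\<^esub> snd q \<oplus>\<^bsub>E\<^esub> (G q \<otimes> f (fst q)) \<odot>\<^bsub>E\<^esub> snd q"
      using FM_val[OF F, of q] FM_val[OF G, of q] q fc[OF q(1)] by (simp add: fadd_def l_distr smult_l_distr)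
  qed simp
  also have "\<dots> = phi f B F \<oplus>\<^bsub>E\<^esub> phi f B G"
    unfolding phi_def by (rule M.finsum_addf[OF term_closed[OF F B] term_closed[OF G B]])
  finally show ?thesis .
qed

lemma phi_smult:
  assumes r: "r \<in> carrier R" and F: "F \<in> carrier (FM R)" and B: "B \<subseteq> carrier L \<times> carrier E" and fin: "finite B"
  shows "phi f B (fsmult R r F) = r \<odot>\<^bsub>E\<^esub> phi f B F"
proof -
  have "phi f B (fsmult R r F) = finsum E (\<lambda>q. r \<odot>\<^bsub>E\<^esub> ((F q \<otimes> f (fst q)) \<odot>\<^bsub>E\<^esub> snd q)) B"
    unfolding phi_def
  proof (rule M.finsum_cong')
    show "(\<lambda>q. r \<odot>\<^bsub>E\<^esub> ((F q \<otimes> f (fst q)) \<odot>\<^bsub>E\<^esub> snd q)) \<in> B \<rightarrow> carrier E"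
      using term_closed[OF F B] r by (auto simp: Pi_def)
    fix q assume "q \<in> B"
    then have q: "fst q \<in> carrier L" "snd q \<in> carrier E" using B by auto
    show "(fsmult R r F q \<otimes> f (fst q)) \<odot>\<^bsub>E\<^esub> snd q = r \<odot>\<^bsub>E\<^esub> ((F q \<otimes> f (fst q)) \<odot>\<^bsub>E\<^esub> snd q)"
      using FM_val[OF F, of q] r q fc[OF q(1)] by (simp add: fsmult_def m_assoc smult_assoc1)
  qed simp
  also have "\<dots> = r \<odot>\<^bsub>E\<^esub> phi f B F"
    unfolding phi_def by (rule finsum_smult_ldistr[OF fin r term_closed[OF F B], symmetric])
  finally show ?thesis .
qed

lemma phi_sub:
  assumes F: "F \<in> carrier (FM R)" and G: "G \<in> carrier (FM R)" and B: "B \<subseteq> carrier L \<times> carrier E" and fin: "finite B"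
  shows "phi f B (fsub R F G) = phi f B F \<ominus>\<^bsub>E\<^esub> phi f B G"
proof -
  have eq: "fsub R F G = fadd R F (fsmult R (\<ominus> \<one>) G)"
  proof
    fix q show "fsub R F G q = fadd R F (fsmult R (\<ominus> \<one>) G) q"
      using FM_val[OF F, of q] FM_val[OF G, of q] by (simp add: fsub_def fadd_def fsmult_def a_minus_def l_minus)
  qed
  have G': "fsmult R (\<ominus> \<one>) G \<in> carrier (FM R)" using G by (simp add: fsmult_def)
  have "phi f B (fsub R F G) = phi f B F \<oplus>\<^bsub>E\<^esub> (\<ominus> \<one>) \<odot>\<^bsub>E\<^esub> phi f B G"
  proof -
    have m1: "\<ominus> \<one> \<in> carrier R" by simp
    show ?thesis unfolding eq phi_add[OF F G' B] phi_smult[OF m1 G B fin] ..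
  qed
  also have "\<dots> = phi f B F \<ominus>\<^bsub>E\<^esub> phi f B G"
    using phi_closed[OF G B] by (simp add: smult_l_minus M.minus_eq)
  finally show ?thesis .
qed

lemma phi_delta:
  assumes p: "p \<in> B" and B: "B \<subseteq> carrier L \<times> carrier E" and fin: "finite B"
  shows "phi f B (fdelta R p) = f (fst p) \<odot>\<^bsub>E\<^esub> snd p"
proof -
  have Bp: "B = insert p (B - {p})" using p by blast
  have tc: "(\<lambda>q. (fdelta R p q \<otimes> f (fst q)) \<odot>\<^bsub>E\<^esub> snd q) \<in> B \<rightarrow> carrier E"
    by (rule term_closed[OF fdelta_FM B])
  have pc: "fst p \<in> carrier L" "snd p \<in> carrier E" using p B by auto
  have rest: "finsum E (\<lambda>q. (fdelta R p q \<otimes> f (fst q)) \<odot>\<^bsub>E\<^esub> snd q) (B - {p}) = finsum E (\<lambda>q. \<zero>\<^bsub>E\<^esub>) (B - {p})"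
  proof (rule M.finsum_cong')
    fix q assume q: "q \<in> B - {p}"
    then have "fst q \<in> carrier L" "snd q \<in> carrier E" using B by auto
    then show "(fdelta R p q \<otimes> f (fst q)) \<odot>\<^bsub>E\<^esub> snd q = \<zero>\<^bsub>E\<^esub>" using q fc[of "fst q"] by (simp add: fdelta_def)
  qed auto
  have tc': "(\<lambda>q. (fdelta R p q \<otimes> f (fst q)) \<odot>\<^bsub>E\<^esub> snd q) \<in> (B - {p}) \<rightarrow> carrier E"
    using tc unfolding Pi_def by blast
  have tp: "(fdelta R p p \<otimes> f (fst p)) \<odot>\<^bsub>E\<^esub> snd p \<in> carrier E" using tc p by blast
  have "phi f B (fdelta R p) = finsum E (\<lambda>q. (fdelta R p q \<otimes> f (fst q)) \<odot>\<^bsub>E\<^esub> snd q) (insert p (B - {p}))"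
    unfolding phi_def using Bp by simp
  also have "\<dots> = (fdelta R p p \<otimes> f (fst p)) \<odot>\<^bsub>E\<^esub> snd p \<oplus>\<^bsub>E\<^esub>
      finsum E (\<lambda>q. (fdelta R p q \<otimes> f (fst q)) \<odot>\<^bsub>E\<^esub> snd q) (B - {p})"
    by (rule M.finsum_insert[OF _ _ tc' tp]) (use fin in auto)
  also have "\<dots> = f (fst p) \<odot>\<^bsub>E\<^esub> snd p" unfolding rest using pc fc[OF pc(1)] by (simp add: fdelta_def)
  finally show ?thesis .
qed


lemma fsub_FM: "F \<in> carrier (FM R) \<Longrightarrow> G \<in> carrier (FM R) \<Longrightarrow> fsub R F G \<in> carrier (FM R)"
  by (simp add: fsub_def)
lemma fsmult_FM: "r \<in> carrier R \<Longrightarrow> G \<in> carrier (FM R) \<Longrightarrow> fsmult R r G \<in> carrier (FM R)"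
  by (simp add: fsmult_def)

lemma rel_phi:
  assumes L: "module R L" and F: "F \<in> tensor_relations R L E"
  shows "\<exists>A. finite A \<and> A \<subseteq> carrier L \<times> carrier E \<and>
    (\<forall>B. finite B \<and> A \<subseteq> B \<and> B \<subseteq> carrier L \<times> carrier E \<longrightarrow> phi f B F = \<zero>\<^bsub>E\<^esub>)"
  using F
proof (induction rule: tensor_relations.induct)
  case zero
  have "phi f B (\<lambda>_. \<zero>) = \<zero>\<^bsub>E\<^esub>" if B: "B \<subseteq> carrier L \<times> carrier E" for B
  proof -
    have "phi f B (\<lambda>_. \<zero>) = finsum E (\<lambda>q. \<zero>\<^bsub>E\<^esub>) B" unfolding phi_def
    proof (rule M.finsum_cong')
      fix q assume "q \<in> B"
      then have "fst q \<in> carrier L" "snd q \<in> carrier E" using B by auto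
      then show "(\<zero> \<otimes> f (fst q)) \<odot>\<^bsub>E\<^esub> snd q = \<zero>\<^bsub>E\<^esub>" using fc[of "fst q"] by simp
    qed auto
    then show ?thesis by simp
  qed
  then show ?case by (intro exI[of _ "{}"]) auto
next
  case (add_left x y u)
  let ?A = "{(x \<oplus>\<^bsub>L\<^esub> y, u), (x, u), (y, u)}"
  have xy: "x \<oplus>\<^bsub>L\<^esub> y \<in> carrier L"
    using abelian_monoid.a_closed[OF abelian_group.axioms(1)[OF module.axioms(2)[OF L]]] add_left by blast
  show ?case
  proof (intro exI[of _ ?A] conjI allI impI)
    show "finite ?A" by simp
    show "?A \<subseteq> carrier L \<times> carrier E" using add_left xy by auto
    fix B assume B: "finite B \<and> ?A \<subseteq> B \<and> B \<subseteq> carrier L \<times> carrier E"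
    have Bs: "B \<subseteq> carrier L \<times> carrier E" and fin: "finite B" using B by auto
    have "phi f B (fsub R (fsub R (fdelta R (x \<oplus>\<^bsub>L\<^esub> y, u)) (fdelta R (x, u))) (fdelta R (y, u)))
      = (f (x \<oplus>\<^bsub>L\<^esub> y) \<odot>\<^bsub>E\<^esub> u \<ominus>\<^bsub>E\<^esub> f x \<odot>\<^bsub>E\<^esub> u) \<ominus>\<^bsub>E\<^esub> f y \<odot>\<^bsub>E\<^esub> u"
      using B by (simp add: phi_sub[OF fsub_FM[OF fdelta_FM fdelta_FM] fdelta_FM Bs fin]
          phi_sub[OF fdelta_FM fdelta_FM Bs fin] phi_delta[OF _ Bs fin])
    also have "\<dots> = \<zero>\<^bsub>E\<^esub>" using add_left fc fadd_l by (simp add: smult_l_distr M.minus3_zero)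
    finally show "phi f B (fsub R (fsub R (fdelta R (x \<oplus>\<^bsub>L\<^esub> y, u)) (fdelta R (x, u))) (fdelta R (y, u))) = \<zero>\<^bsub>E\<^esub>" .
  qed
next
  case (add_right x u v)
  let ?A = "{(x, u \<oplus>\<^bsub>E\<^esub> v), (x, u), (x, v)}"
  show ?case
  proof (intro exI[of _ ?A] conjI allI impI)
    show "finite ?A" by simp
    show "?A \<subseteq> carrier L \<times> carrier E" using add_right by auto
    fix B assume B: "finite B \<and> ?A \<subseteq> B \<and> B \<subseteq> carrier L \<times> carrier E"
    have Bs: "B \<subseteq> carrier L \<times> carrier E" and fin: "finite B" using B by auto
    have "phi f B (fsub R (fsub R (fdelta R (x, u \<oplus>\<^bsub>E\<^esub> v)) (fdelta R (x, u))) (fdelta R (x, v)))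
      = (f x \<odot>\<^bsub>E\<^esub> (u \<oplus>\<^bsub>E\<^esub> v) \<ominus>\<^bsub>E\<^esub> f x \<odot>\<^bsub>E\<^esub> u) \<ominus>\<^bsub>E\<^esub> f x \<odot>\<^bsub>E\<^esub> v"
      using B by (simp add: phi_sub[OF fsub_FM[OF fdelta_FM fdelta_FM] fdelta_FM Bs fin]
          phi_sub[OF fdelta_FM fdelta_FM Bs fin] phi_delta[OF _ Bs fin])
    also have "\<dots> = \<zero>\<^bsub>E\<^esub>" using add_right fc by (simp add: smult_r_distr M.minus3_zero)
    finally show "phi f B (fsub R (fsub R (fdelta R (x, u \<oplus>\<^bsub>E\<^esub> v)) (fdelta R (x, u))) (fdelta R (x, v))) = \<zero>\<^bsub>E\<^esub>" .
  qed
next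
  case (smult_left r x u)
  have rx: "r \<odot>\<^bsub>L\<^esub> x \<in> carrier L" using module.smult_closed[OF L] smult_left by blast
  let ?A = "{(r \<odot>\<^bsub>L\<^esub> x, u), (x, u)}"
  show ?case
  proof (intro exI[of _ ?A] conjI allI impI)
    show "finite ?A" by simp
    show "?A \<subseteq> carrier L \<times> carrier E" using smult_left rx by auto
    fix B assume B: "finite B \<and> ?A \<subseteq> B \<and> B \<subseteq> carrier L \<times> carrier E"
    have Bs: "B \<subseteq> carrier L \<times> carrier E" and fin: "finite B" using B by auto
    have "phi f B (fsub R (fdelta R (r \<odot>\<^bsub>L\<^esub> x, u)) (fsmult R r (fdelta R (x, u))))
      = f (r \<odot>\<^bsub>L\<^esub> x) \<odot>\<^bsub>E\<^esub> u \<ominus>\<^bsub>E\<^esub> r \<odot>\<^bsub>E\<^esub> (f x \<odot>\<^bsub>E\<^esub> u)"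
      using B smult_left by (simp add: phi_sub[OF fdelta_FM fsmult_FM[OF _ fdelta_FM] Bs fin]
          phi_smult[OF _ fdelta_FM Bs fin] phi_delta[OF _ Bs fin])
    also have "\<dots> = \<zero>\<^bsub>E\<^esub>" using smult_left fc fsm_l by (simp add: smult_assoc1 M.minus_self)
    finally show "phi f B (fsub R (fdelta R (r \<odot>\<^bsub>L\<^esub> x, u)) (fsmult R r (fdelta R (x, u)))) = \<zero>\<^bsub>E\<^esub>" .
  qed
next
  case (smult_right r x u)
  let ?A = "{(x, r \<odot>\<^bsub>E\<^esub> u), (x, u)}"
  show ?case
  proof (intro exI[of _ ?A] conjI allI impI)
    show "finite ?A" by simp
    show "?A \<subseteq> carrier L \<times> carrier E" using smult_right by auto
    fix B assume B: "finite B \<and> ?A \<subseteq> B \<and> B \<subseteq> carrier L \<times> carrier E"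
    have Bs: "B \<subseteq> carrier L \<times> carrier E" and fin: "finite B" using B by auto
    have "phi f B (fsub R (fdelta R (x, r \<odot>\<^bsub>E\<^esub> u)) (fsmult R r (fdelta R (x, u))))
      = f x \<odot>\<^bsub>E\<^esub> (r \<odot>\<^bsub>E\<^esub> u) \<ominus>\<^bsub>E\<^esub> r \<odot>\<^bsub>E\<^esub> (f x \<odot>\<^bsub>E\<^esub> u)"
      using B smult_right by (simp add: phi_sub[OF fdelta_FM fsmult_FM[OF _ fdelta_FM] Bs fin]
          phi_smult[OF _ fdelta_FM Bs fin] phi_delta[OF _ Bs fin])
    also have "\<dots> = \<zero>\<^bsub>E\<^esub>" using smult_right fc smult_comm[of "f x" r u] by (simp add: M.minus_self)
    finally show "phi f B (fsub R (fdelta R (x, r \<odot>\<^bsub>E\<^esub> u)) (fsmult R r (fdelta R (x, u)))) = \<zero>\<^bsub>E\<^esub>" .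
  qed
next
  case (sum F G)
  obtain A1 where A1: "finite A1" "A1 \<subseteq> carrier L \<times> carrier E"
    "\<And>B. finite B \<and> A1 \<subseteq> B \<and> B \<subseteq> carrier L \<times> carrier E \<Longrightarrow> phi f B F = \<zero>\<^bsub>E\<^esub>" using sum.IH(1) by blast
  obtain A2 where A2: "finite A2" "A2 \<subseteq> carrier L \<times> carrier E"
    "\<And>B. finite B \<and> A2 \<subseteq> B \<and> B \<subseteq> carrier L \<times> carrier E \<Longrightarrow> phi f B G = \<zero>\<^bsub>E\<^esub>" using sum.IH(2) by blast
  show ?case
  proof (intro exI[of _ "A1 \<union> A2"] conjI allI impI)
    show "finite (A1 \<union> A2)" using A1 A2 by simp
    show "A1 \<union> A2 \<subseteq> carrier L \<times> carrier E" using A1 A2 by simp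
    fix B assume B: "finite B \<and> A1 \<union> A2 \<subseteq> B \<and> B \<subseteq> carrier L \<times> carrier E"
    then have "phi f B F = \<zero>\<^bsub>E\<^esub>" "phi f B G = \<zero>\<^bsub>E\<^esub>" using A1(3) A2(3) by auto
    then show "phi f B (fadd R F G) = \<zero>\<^bsub>E\<^esub>"
      using phi_add[OF rel_carrier[OF sum.hyps(1)] rel_carrier[OF sum.hyps(2)]] B by simp
  qed
next
  case (scale r F)
  obtain A1 where A1: "finite A1" "A1 \<subseteq> carrier L \<times> carrier E"
    "\<And>B. finite B \<and> A1 \<subseteq> B \<and> B \<subseteq> carrier L \<times> carrier E \<Longrightarrow> phi f B F = \<zero>\<^bsub>E\<^esub>" using scale.IH by blast
  show ?case
  proof (intro exI[of _ A1] conjI allI impI)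
    show "finite A1" "A1 \<subseteq> carrier L \<times> carrier E" using A1 by simp_all
    fix B assume B: "finite B \<and> A1 \<subseteq> B \<and> B \<subseteq> carrier L \<times> carrier E"
    then have "phi f B F = \<zero>\<^bsub>E\<^esub>" using A1(3) by auto
    then show "phi f B (fsmult R r F) = \<zero>\<^bsub>E\<^esub>"
      using phi_smult[OF scale.hyps(1) rel_carrier[OF scale.hyps(2)]] B scale.hyps(1) by simp
  qed
qed


lemma easy_tensor:
  assumes L: "module R L" and tz: "tensor_zero R L E s u" and s: "s \<in> carrier L" and u: "u \<in> carrier E"
  shows "f s \<odot>\<^bsub>E\<^esub> u = \<zero>\<^bsub>E\<^esub>"
proof -
  obtain A where A: "finite A" "A \<subseteq> carrier L \<times> carrier E"
    "\<And>B. finite B \<and> A \<subseteq> B \<and> B \<subseteq> carrier L \<times> carrier E \<Longrightarrow> phi f B (fdelta R (s,u)) = \<zero>\<^bsub>E\<^esub>"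
    using rel_phi[OF L tz[unfolded tensor_zero_def]] by blast
  let ?B = "insert (s,u) A"
  have B: "finite ?B" "?B \<subseteq> carrier L \<times> carrier E" using A s u by auto
  have "phi f ?B (fdelta R (s,u)) = \<zero>\<^bsub>E\<^esub>" using A(3) B by blast
  moreover have "phi f ?B (fdelta R (s,u)) = f s \<odot>\<^bsub>E\<^esub> u" using phi_delta[OF _ B(2) B(1)] by simp
  ultimately show ?thesis by simp
qed

end


lemma ann_ideal:
  assumes U: "U \<subseteq> carrier E" shows "ideal (annihilator R E U) R"
proof (rule ideal_by_closure)
  show "annihilator R E U \<subseteq> carrier R" unfolding annihilator_def by blast
  show "\<zero> \<in> annihilator R E U" unfolding annihilator_def using U by auto
  fix a b assume "a \<in> annihilator R E U" "b \<in> annihilator R E U"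
  then show "a \<oplus> b \<in> annihilator R E U" unfolding annihilator_def using U by (auto simp: smult_l_distr)
next
  fix a x assume "a \<in> annihilator R E U" "x \<in> carrier R"
  then show "x \<otimes> a \<in> annihilator R E U" unfolding annihilator_def using U by (auto simp: smult_assoc1)
qed

end

theorem theorem7p19:
  fixes R :: "('a, 'b) ring_scheme" and m :: "'a set"
    and L :: "('a, 'l) module" and S :: "'l set"
    and E :: "('a, 'e) module"
  assumes "noetherian_ring R"
    and "local_ring R m"
    and "madic_complete R m"
    and "is_injective_hull_residue_field R m E"
    and "module R L"
    and "S \<subseteq> carrier L"
  shows "trace_ideal R S L = annihilator R E (zero_closure R S L E)"
proof -
  note noeth = assms(1) and compl = assms(3) and L = assms(5) and SL = assms(6)
  have modE: "module R E" and baer: "baer_injective R E" using assms(4) unfolding is_injective_hull_residue_field_def by blast+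
  obtain e0 where e0: "e0 \<in> carrier E" "annihilator R E {e0} = m"
    "\<And>N. submodule N R E \<Longrightarrow> N \<noteq> {\<zero>\<^bsub>E\<^esub>} \<Longrightarrow> \<exists>r\<in>carrier R. r \<odot>\<^bsub>E\<^esub> e0 \<in> N \<and> r \<odot>\<^bsub>E\<^esub> e0 \<noteq> \<zero>\<^bsub>E\<^esub>"
    using assms(4) unfolding is_injective_hull_residue_field_def by blast
  have mmax: "maximalideal m R" and muniq: "\<And>I. maximalideal I R \<Longrightarrow> I = m"
    using assms(2) unfolding local_ring_def by blast+
  interpret C: ctx R E m e0
    by (rule ctx.intro[OF modE ctx_axioms.intro[OF noeth mmax muniq baer e0(1) e0(2) e0(3)]])
  define Gs where "Gs = {f s | f s. f \<in> lin_functionals R L \<and> s \<in> S}"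
  have T: "trace_ideal R S L = Idl\<^bsub>R\<^esub> Gs" unfolding trace_ideal_def Gs_def ..
  have Gsc: "Gs \<subseteq> carrier R" unfolding Gs_def lin_functionals_def using SL by blast
  have Tid: "ideal (Idl\<^bsub>R\<^esub> Gs) R" by (rule C.genideal_ideal[OF Gsc])
  have Zc: "zero_closure R S L E \<subseteq> carrier E" unfolding zero_closure_def by blast
  show ?thesis
  proof
    show "trace_ideal R S L \<subseteq> annihilator R E (zero_closure R S L E)"
      unfolding T
    proof (rule C.genideal_minimal[OF C.ann_ideal[OF Zc]])
      show "Gs \<subseteq> annihilator R E (zero_closure R S L E)"
      proof
        fix g assume "g \<in> Gs"
        then obtain f s where fs: "g = f s" "f \<in> lin_functionals R L" "s \<in> S" unfolding Gs_def by blast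
        have sc: "s \<in> carrier L" using fs SL by blast
        have "\<forall>u\<in>zero_closure R S L E. f s \<odot>\<^bsub>E\<^esub> u = \<zero>\<^bsub>E\<^esub>"
        proof
          fix u assume "u \<in> zero_closure R S L E"
          then have u: "u \<in> carrier E" "tensor_zero R L E s u" using fs(3) unfolding zero_closure_def by blast+
          show "f s \<odot>\<^bsub>E\<^esub> u = \<zero>\<^bsub>E\<^esub>" by (rule C.easy_tensor[OF fs(2) L u(2) sc u(1)])
        qed
        moreover have "f s \<in> carrier R" using fs sc unfolding lin_functionals_def by blast
        ultimately show "g \<in> annihilator R E (zero_closure R S L E)" unfolding annihilator_def fs(1) by blast
      qed
    qed
  next
    show "annihilator R E (zero_closure R S L E) \<subseteq> trace_ideal R S L"
    proof
      fix r assume r: "r \<in> annihilator R E (zero_closure R S L E)"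
      then have rc: "r \<in> carrier R" unfolding annihilator_def by blast
      show "r \<in> trace_ideal R S L"
      proof (rule ccontr)
        assume "r \<notin> trace_ideal R S L"
        then have "r \<notin> Idl\<^bsub>R\<^esub> Gs" unfolding T .
        then obtain u where u: "u \<in> carrier E" "\<forall>j\<in>Idl\<^bsub>R\<^esub> Gs. j \<odot>\<^bsub>E\<^esub> u = \<zero>\<^bsub>E\<^esub>" "r \<odot>\<^bsub>E\<^esub> u = e0"
          using C.BT[OF Tid rc] by blast
        have "u \<in> zero_closure R S L E" unfolding zero_closure_def
        proof (intro CollectI conjI ballI)
          show "u \<in> carrier E" by (rule u(1))
          fix s assume s: "s \<in> S"
          then have sc: "s \<in> carrier L" using SL by blast
          show "tensor_zero R L E s u"
          proof (rule C.hard_tensor[OF compl L sc u(1)])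
            fix f assume "f \<in> lin_functionals R L"
            then have "f s \<in> Gs" unfolding Gs_def using s by blast
            then have "f s \<in> Idl\<^bsub>R\<^esub> Gs" using C.genideal_self[OF Gsc] by blast
            then show "f s \<odot>\<^bsub>E\<^esub> u = \<zero>\<^bsub>E\<^esub>" using u(2) by blast
          qed
        qed
        then have "r \<odot>\<^bsub>E\<^esub> u = \<zero>\<^bsub>E\<^esub>" using r unfolding annihilator_def by blast
        then show False using u(3) C.e0_nz by simp
      qed
    qed
  qed
qed

end
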